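(* Consider the following instance of the setup. $\mathcal A=\{0,1\}$ with $A$ uniform; $B$ is the output of a binary erasure channel with erasure probability $\beta\in[0,1]$ and input $A$ (so $\mathcal B=\{0,1,\mathrm{e}\}$, $B=A$ with probability $1-\beta$ and $B=\mathrm{e}$ with probability $\beta$); $E$ is the output of a binary symmetric channel with crossover probability $\epsilon\in[0,1/2]$ and input $A$, where $B$ and $E$ are conditionally independent given $A$. The channel has $\mathcal X=\mathcal Y=\mathcal Z=\{0,1\}$, $Y=X$ (noiseless), and $Z$ is the output of a binary symmetric channel with crossover probability $\zeta\in[0,1/2]$ and input $X$. The distortion is Hamming, $d(a,\hat a)=\mathbf 1\{a\ne\hat a\}$. Let $\mathcal R_{\mathrm{in}}$ be the set of tuples $(k,D,\Delta)\in\mathbb{R}_+^3$ satisfying the conditions of the inner bound below. Then for every $\Delta\ge0$: $(1,0,\Delta)\in\mathcal R_{\mathrm{in}}$ if and only if there exist $u,q\in[0,1/2]$ such that \begin{align*} \beta\,(1-h_2(u))&\le 1-h_2(q),\\ \Delta&\le h_2(\epsilon)+h_2(u)-h_2(\epsilon\star u)-\Big[\beta\,h_2(u)-\big(h_2(\zeta)+h_2(q)-h_2(\zeta\star q)\big)\Big]_+ . \end{align*}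
   Context: Here $h_2(x)=-x\log_2 x-(1-x)\log_2(1-x)$ is the binary entropy function, $a\star b=a(1-b)+(1-a)b$, and $[x]_+=\max(0,x)$. Inner bound region $\mathcal R_{\mathrm{in}}$: a tuple $(k,D,\Delta)\in\mathbb{R}_+^3$ belongs to $\mathcal R_{\mathrm{in}}$ iff there exist random variables $U,V,Q,T$ on finite sets, an input distribution $p(x)$, and a function $\hat A:\mathcal V\times\mathcal B\to\mathcal A$ with joint distribution $p(u|v)\,p(v|a)\,p(a,b,e)\,p(q|t)\,p(t|x)\,p(x)\,P(y,z|x)$ such that $I(U;A|B)\le k\,I(Q;Y)$, $I(V;A|B)\le k\,I(T;Y)$, $D\ge\mathbb{E}[d(A,\hat A(V,B))]$, and $\Delta\le H(A|U,E)-\big[I(V;A|U,B)-k\big(I(T;Y|Q)-I(T;Z|Q)\big)\big]_+$. Here $(A,B,E)$ has the source distribution and $(Y,Z)$ is the channel output for input $X$. *)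

theory Defs
  imports "HOL-Probability.Probability"
begin

definition h2 :: "real \<Rightarrow> real" where
  "h2 x = - x * log 2 x - (1 - x) * log 2 (1 - x)"
  (* note: in Isabelle log 2 0 = 0, so 0 * log 2 0 = 0 as in the convention 0 log 0 = 0 *)

definition star :: "real \<Rightarrow> real \<Rightarrow> real" where
  "star a b = a * (1 - b) + (1 - a) * b"

definition pos_part :: "real \<Rightarrow> real" where
  "pos_part x = max 0 x"

definition ent :: "'a pmf \<Rightarrow> real" where
  "ent p = (\<Sum>x\<in>set_pmf p. - pmf p x * log 2 (pmf p x))"

definition Hv :: "'w pmf \<Rightarrow> ('w \<Rightarrow> 'a) \<Rightarrow> real" where
  "Hv J X = ent (map_pmf X J)"

definition MI :: "'w pmf \<Rightarrow> ('w \<Rightarrow> 'a) \<Rightarrow> ('w \<Rightarrow> 'b) \<Rightarrow> real" where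
  "MI J X Y = Hv J X + Hv J Y - Hv J (\<lambda>w. (X w, Y w))"

definition CMI :: "'w pmf \<Rightarrow> ('w \<Rightarrow> 'a) \<Rightarrow> ('w \<Rightarrow> 'b) \<Rightarrow> ('w \<Rightarrow> 'c) \<Rightarrow> real" where
  "CMI J X Y Z = Hv J (\<lambda>w. (X w, Z w)) + Hv J (\<lambda>w. (Y w, Z w))
                 - Hv J (\<lambda>w. (X w, Y w, Z w)) - Hv J Z"

definition CH :: "'w pmf \<Rightarrow> ('w \<Rightarrow> 'a) \<Rightarrow> ('w \<Rightarrow> 'b) \<Rightarrow> real" where
  "CH J X Y = Hv J (\<lambda>w. (X w, Y w)) - Hv J Y"

text \<open>Binary symmetric channel with crossover probability p, and binary erasure
  channel with erasure probability p (None = erasure symbol e).\<close>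
definition bsc :: "real \<Rightarrow> bool \<Rightarrow> bool pmf" where
  "bsc p a = map_pmf (\<lambda>flip. if flip then \<not> a else a) (bernoulli_pmf p)"

definition bec :: "real \<Rightarrow> bool \<Rightarrow> bool option pmf" where
  "bec p a = map_pmf (\<lambda>er. if er then None else Some a) (bernoulli_pmf p)"

text \<open>Source outcomes (U, V, A, B, E); auxiliary alphabets encoded in nat.\<close>
type_synonym src_outcome = "nat \<times> nat \<times> bool \<times> bool option \<times> bool"

definition src_joint :: "real \<Rightarrow> real \<Rightarrow> (bool \<Rightarrow> nat pmf) \<Rightarrow> (nat \<Rightarrow> nat pmf)
    \<Rightarrow> src_outcome pmf" where
  "src_joint \<beta> \<epsilon> pV pU =
     do { a \<leftarrow> bernoulli_pmf (1/2); b \<leftarrow> bec \<beta> a; e \<leftarrow> bsc \<epsilon> a;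
          v \<leftarrow> pV a; u \<leftarrow> pU v; return_pmf (u, v, a, b, e) }"

definition sU :: "src_outcome \<Rightarrow> nat" where "sU w = (case w of (u,v,a,b,e) \<Rightarrow> u)"
definition sV :: "src_outcome \<Rightarrow> nat" where "sV w = (case w of (u,v,a,b,e) \<Rightarrow> v)"
definition sA :: "src_outcome \<Rightarrow> bool" where "sA w = (case w of (u,v,a,b,e) \<Rightarrow> a)"
definition sB :: "src_outcome \<Rightarrow> bool option" where "sB w = (case w of (u,v,a,b,e) \<Rightarrow> b)"
definition sE :: "src_outcome \<Rightarrow> bool" where "sE w = (case w of (u,v,a,b,e) \<Rightarrow> e)"

text \<open>Channel outcomes (Q, T, X, Y, Z), with Y = X and Z = BSC(zeta) of X.\<close>
type_synonym chan_outcome = "nat \<times> nat \<times> bool \<times> bool \<times> bool"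

definition chan_joint :: "real \<Rightarrow> bool pmf \<Rightarrow> (bool \<Rightarrow> nat pmf) \<Rightarrow> (nat \<Rightarrow> nat pmf)
    \<Rightarrow> chan_outcome pmf" where
  "chan_joint \<zeta> pX pT pQ =
     do { x \<leftarrow> pX; t \<leftarrow> pT x; q \<leftarrow> pQ t; z \<leftarrow> bsc \<zeta> x;
          return_pmf (q, t, x, x, z) }"

definition cQ :: "chan_outcome \<Rightarrow> nat" where "cQ w = (case w of (q,t,x,y,z) \<Rightarrow> q)"
definition cT :: "chan_outcome \<Rightarrow> nat" where "cT w = (case w of (q,t,x,y,z) \<Rightarrow> t)"
definition cY :: "chan_outcome \<Rightarrow> bool" where "cY w = (case w of (q,t,x,y,z) \<Rightarrow> y)"
definition cZ :: "chan_outcome \<Rightarrow> bool" where "cZ w = (case w of (q,t,x,y,z) \<Rightarrow> z)"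

definition R_in :: "real \<Rightarrow> real \<Rightarrow> real \<Rightarrow> (real \<times> real \<times> real) set" where
  "R_in \<beta> \<epsilon> \<zeta> = {(k, D, \<Delta>). k \<ge> 0 \<and> D \<ge> 0 \<and> \<Delta> \<ge> 0 \<and>
     (\<exists>(UU::nat set) (VV::nat set) (QQ::nat set) (TT::nat set)
        (pU::nat \<Rightarrow> nat pmf) (pV::bool \<Rightarrow> nat pmf) (pQ::nat \<Rightarrow> nat pmf)
        (pT::bool \<Rightarrow> nat pmf) (pX::bool pmf) (Ahat::nat \<Rightarrow> bool option \<Rightarrow> bool).
        finite UU \<and> finite VV \<and> finite QQ \<and> finite TT \<and>
        (\<forall>v. set_pmf (pU v) \<subseteq> UU) \<and> (\<forall>a. set_pmf (pV a) \<subseteq> VV) \<and>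
        (\<forall>t. set_pmf (pQ t) \<subseteq> QQ) \<and> (\<forall>x. set_pmf (pT x) \<subseteq> TT) \<and>
        (let S = src_joint \<beta> \<epsilon> pV pU; C = chan_joint \<zeta> pX pT pQ in
          CMI S sU sA sB \<le> k * MI C cQ cY \<and>
          CMI S sV sA sB \<le> k * MI C cT cY \<and>
          D \<ge> measure_pmf.expectation S (\<lambda>w. if sA w \<noteq> Ahat (sV w) (sB w) then 1 else 0) \<and>
          \<Delta> \<le> CH S sA (\<lambda>w. (sU w, sE w))
               - pos_part (CMI S sV sA (\<lambda>w. (sU w, sB w))
                           - k * (CMI C cT cY cQ - CMI C cT cZ cQ))))}"

end

theory Submission
  imports Defs "HOL-Real_Asymp.Real_Asymp"
begin


definition phi :: "real \<Rightarrow> real \<Rightarrow> real" where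
  "phi a b = - a * log 2 a - b * log 2 b + (a + b) * log 2 (a + b)"

lemma ent_superset:
  assumes "finite A" "set_pmf p \<subseteq> A"
  shows "ent p = (\<Sum>x\<in>A. - pmf p x * log 2 (pmf p x))"
  unfolding ent_def
  by (rule sum.mono_neutral_left) (use assms in \<open>auto simp: set_pmf_iff\<close>)

lemma ent_map_inj:
  assumes "inj_on g (set_pmf M)"
  shows "ent (map_pmf g M) = ent M"
  unfolding ent_def using assms
  by (simp add: sum.reindex pmf_map_inj)

lemma Hv_inj:
  assumes "inj g"
  shows "Hv J (\<lambda>w. g (X w)) = Hv J X"
proof -
  have "map_pmf (\<lambda>w. g (X w)) J = map_pmf g (map_pmf X J)" by (simp add: pmf.map_comp o_def)
  thus ?thesis unfolding Hv_def using assms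
    by (simp add: ent_map_inj inj_on_subset)
qed

lemma ent_return: "ent (return_pmf x) = 0"
  by (simp add: ent_def)

lemma ent_cond_bool:
  fixes M :: "(bool \<times> 'b) pmf"
  assumes "finite Y" "snd ` set_pmf M \<subseteq> Y"
  shows "ent M - ent (map_pmf snd M) = (\<Sum>y\<in>Y. phi (pmf M (True,y)) (pmf M (False,y)))"
proof -
  have sub: "set_pmf M \<subseteq> UNIV \<times> Y" using assms(2) by force
  have e1: "ent M = (\<Sum>x\<in>UNIV \<times> Y. - pmf M x * log 2 (pmf M x))"
    by (rule ent_superset) (use assms sub in auto)
  also have "\<dots> = (\<Sum>y\<in>Y. (- pmf M (True,y) * log 2 (pmf M (True,y))) + (- pmf M (False,y) * log 2 (pmf M (False,y))))"
  proof -
    have "(\<Sum>x\<in>UNIV \<times> Y. - pmf M x * log 2 (pmf M x)) = (\<Sum>b\<in>UNIV. \<Sum>y\<in>Y. - pmf M (b,y) * log 2 (pmf M (b,y)))"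
      by (simp add: sum.cartesian_product)
    also have "\<dots> = (\<Sum>y\<in>Y. - pmf M (True,y) * log 2 (pmf M (True,y))) + (\<Sum>y\<in>Y. - pmf M (False,y) * log 2 (pmf M (False,y)))"
      by (simp add: UNIV_bool)
    also have "\<dots> = (\<Sum>y\<in>Y. (- pmf M (True,y) * log 2 (pmf M (True,y))) + (- pmf M (False,y) * log 2 (pmf M (False,y))))"
      by (rule sum.distrib[symmetric])
    finally show ?thesis .
  qed
  finally have e1': "ent M = \<dots>" .
  have pm: "pmf (map_pmf snd M) y = pmf M (True,y) + pmf M (False,y)" for y
  proof -
    have "snd -` {y} = {(True,y),(False,y)}" by auto
    thus ?thesis by (simp add: pmf_map measure_measure_pmf_finite)
  qed
  have e2: "ent (map_pmf snd M) = (\<Sum>y\<in>Y. - pmf (map_pmf snd M) y * log 2 (pmf (map_pmf snd M) y))"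
    by (rule ent_superset) (use assms in auto)
  show ?thesis unfolding e1' e2 pm phi_def
    by (simp add: sum_subtractf[symmetric] algebra_simps)
qed


definition Hn :: "real \<Rightarrow> real" where
  "Hn p = - p * ln p - (1 - p) * ln (1 - p)"

definition ell :: "real \<Rightarrow> real" where
  "ell p = ln (1 - p) - ln p"

lemma h2_Hn: "h2 p = Hn p / ln 2"
  by (simp add: h2_def Hn_def log_def field_simps)

lemma Hn_sym: "Hn (1 - p) = Hn p"
  by (simp add: Hn_def algebra_simps)

lemma Hn_deriv: "0 < p \<Longrightarrow> p < 1 \<Longrightarrow> DERIV Hn p :> ell p"
  unfolding Hn_def ell_def
  apply (rule derivative_eq_intros refl | simp)+
  done

lemma Hn_cont: "continuous_on {0..1} Hn"
proof (rule continuous_on_IccI)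
  show "(Hn \<longlongrightarrow> Hn 0) (at_right 0)" unfolding Hn_def by simp real_asymp
  show "(Hn \<longlongrightarrow> Hn 1) (at_left 1)" unfolding Hn_def by simp real_asymp
  show "Hn \<midarrow>x\<rightarrow> Hn x" if "0 < x" "x < 1" for x
    using Hn_deriv[OF that] DERIV_isCont isCont_def by blast
qed simp

lemma ell_pos: "0 < p \<Longrightarrow> p < 1/2 \<Longrightarrow> ell p > 0"
  unfolding ell_def by simp

lemma ell_half: "ell (1/2) = 0"
  unfolding ell_def by simp

lemma ell_deriv: "0 < p \<Longrightarrow> p < 1 \<Longrightarrow> DERIV ell p :> (- 1/(p*(1-p)))"
  unfolding ell_def
  apply (rule derivative_eq_intros refl | simp)+
  apply (simp add: field_simps)
  done

lemma ell_eq_rule: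
  assumes "(g has_real_derivative g') (at x)" "0 < g x" "g x < 1" "D = - g' / (g x * (1 - g x))"
  shows "((\<lambda>x. ell (g x)) has_real_derivative D) (at x)"
  using DERIV_chain2[OF ell_deriv[OF assms(2,3)] assms(1)] assms(4) by simp

lemma ell_ge:
  assumes "0 < p" "p \<le> 1/2"
  shows "ell p \<ge> 2 * (1 - 2*p)"
proof -
  have "(\<lambda>x. ell x - 2 * (1 - 2*x)) p \<ge> (\<lambda>x. ell x - 2 * (1 - 2*x)) (1/2)"
  proof (rule DERIV_nonpos_imp_nonincreasing[OF assms(2)])
    fix x assume x: "p \<le> x" "x \<le> 1/2"
    hence x0: "0 < x" "x < 1" using assms by auto
    have "DERIV (\<lambda>x. ell x - 2 * (1 - 2*x)) x :> (- 1/(x*(1-x)) - 2 * (0 - 2 * 1))"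
      using x0 by (auto intro!: derivative_eq_intros ell_eq_rule)
    moreover have "- 1/(x*(1-x)) - 2 * (0 - 2 * 1) \<le> 0"
    proof -
      have "0 \<le> (2*x-1)^2" by simp
      hence "4 * (x*(1-x)) \<le> 1" by (simp add: power2_eq_square algebra_simps)
      hence "4 \<le> 1/(x*(1-x))" using x0 by (simp add: field_simps)
      thus ?thesis by simp
    qed
    ultimately show "\<exists>y. DERIV (\<lambda>x. ell x - 2 * (1 - 2*x)) x :> y \<and> y \<le> 0" by blast
  qed
  thus ?thesis by (simp add: ell_half)
qed

definition Mf :: "real \<Rightarrow> real" where
  "Mf x = x * (1 - x) * ell x / (1 - 2*x)"

lemma Mf_mono:
  assumes "0 < p1" "p1 \<le> p2" "p2 < 1/2"
  shows "Mf p1 \<le> Mf p2"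
proof (rule DERIV_nonneg_imp_nondecreasing[OF assms(2)])
  fix x assume x: "p1 \<le> x" "x \<le> p2"
  hence x0: "0 < x" "x < 1/2" using assms by auto
  define D where "D = ((1 - 2*x + 2*x^2) * ell x - (1 - 2*x)) / (1 - 2*x)^2"
  have "DERIV Mf x :> D"
  proof -
    have "DERIV (\<lambda>x. x * (1 - x) * ell x / (1 - 2*x)) x :>
       (((1 * (1 - x) + x * (0 - 1)) * ell x + x * (1 - x) * (- 1/(x*(1-x)))) * (1 - 2*x) - x * (1 - x) * ell x * (0 - 2 * 1)) / (1 - 2*x)^2"
      using x0 by (auto intro!: derivative_eq_intros ell_eq_rule simp: power2_eq_square)
    moreover have "(((1 * (1 - x) + x * (0 - 1)) * ell x + x * (1 - x) * (- 1/(x*(1-x)))) * (1 - 2*x) - x * (1 - x) * ell x * (0 - 2 * 1)) / (1 - 2*x)^2 = D"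
      using x0 unfolding D_def by (simp add: field_simps) (simp add: algebra_simps power2_eq_square)
    ultimately show ?thesis unfolding Mf_def by simp
  qed
  moreover have "D \<ge> 0"
  proof -
    have e: "ell x \<ge> 2 * (1 - 2*x)" using ell_ge x0 by auto
    have "0 < x^2" using x0 by simp
    moreover have "0 \<le> (1 - x)^2" by simp
    ultimately have c: "1 - 2*x + 2*x^2 > 0" by (simp add: power2_eq_square algebra_simps)
    have "(1 - 2*x + 2*x^2) * ell x \<ge> (1 - 2*x + 2*x^2) * (2 * (1 - 2*x))"
      using mult_left_mono[OF e] c by simp
    moreover have "(1 - 2*x + 2*x^2) * (2 * (1 - 2*x)) - (1 - 2*x) = (1 - 2*x)^3"
      by (simp add: algebra_simps power2_eq_square power3_eq_cube)
    moreover have "(1 - 2*x)^3 \<ge> 0" using x0 by simp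
    ultimately have num: "(1 - 2*x + 2*x^2) * ell x - (1 - 2*x) \<ge> 0" by linarith
    show ?thesis unfolding D_def by (rule divide_nonneg_nonneg[OF num]) simp
  qed
  ultimately show "\<exists>y. DERIV Mf x :> y \<and> y \<ge> 0" by blast
qed

lemma star_alt: "star e x = e + (1 - 2*e) * x"
  unfolding star_def by (simp add: algebra_simps)

lemma rho_mono:
  assumes e: "0 \<le> e" "e < 1/2" and p: "0 < p1" "p1 \<le> p2" "p2 < 1/2"
  shows "ell (star e p1) / ell p1 \<le> ell (star e p2) / ell p2"
proof (rule DERIV_nonneg_imp_nondecreasing[OF p(2)])
  fix x assume x: "p1 \<le> x" "x \<le> p2"
  hence x0: "0 < x" "x < 1/2" using p by auto
  define c where "c = 1 - 2*e"
  define a where "a = star e x"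
  have c0: "0 < c" "c \<le> 1" using e by (auto simp: c_def)
  have a_eq: "a = e + c * x" unfolding a_def c_def star_alt ..
  have "e*(2*x) \<le> e*1" by (rule mult_left_mono) (use e x0 in auto)
  hence xa: "x \<le> a" unfolding a_eq c_def by (simp add: algebra_simps)
  have a1: "a < 1/2"
  proof -
    have "c * x < c * (1/2)" using c0 x0 by simp
    thus ?thesis unfolding a_eq c_def by (simp add: algebra_simps)
  qed
  have a0: "0 < a" using xa x0 by simp
  have ex: "0 < ell x" using ell_pos x0 by simp
  have ea: "0 < ell a" using ell_pos a0 a1 by simp
  define D where "D = (ell a / (x*(1-x)) - c * ell x / (a*(1-a))) / (ell x)^2"
  have fe: "(\<lambda>x. ell (star e x) / ell x) = (\<lambda>x. ell (e + c*x) / ell x)"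
    unfolding star_alt c_def ..
  have "DERIV (\<lambda>x. ell (e + c*x) / ell x) x :> D"
    unfolding D_def using x0 a0 a1 ex unfolding a_eq
    by (auto intro!: derivative_eq_intros ell_eq_rule simp: field_simps power2_eq_square)
  hence "DERIV (\<lambda>x. ell (star e x) / ell x) x :> D" unfolding fe .
  moreover have "D \<ge> 0"
  proof -
    have "Mf x \<le> Mf a" using Mf_mono[OF x0(1) xa a1] .
    hence m: "x * (1 - x) * ell x / (1 - 2*x) \<le> a * (1 - a) * ell a / (1 - 2*a)" unfolding Mf_def .
    have ca: "1 - 2*a = c * (1 - 2*x)" unfolding a_eq c_def by (simp add: algebra_simps)
    have pos: "0 < 1 - 2*x" "0 < 1 - 2*a" using x0 a1 by auto
    have "x * (1 - x) * ell x * (1 - 2*a) \<le> a * (1 - a) * ell a * (1 - 2*x)"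
      using m pos by (simp add: field_simps)
    hence "(c * (x * (1 - x) * ell x)) * (1 - 2*x) \<le> (a * (1 - a) * ell a) * (1 - 2*x)"
      unfolding ca by (simp add: algebra_simps)
    hence key: "c * (x * (1 - x) * ell x) \<le> a * (1 - a) * ell a"
      using pos(1) by (simp add: mult_le_cancel_right)
    have px: "0 < x*(1-x)" "0 < a*(1-a)" using x0 a0 a1 by auto
    have "c * ell x / (a*(1-a)) \<le> ell a / (x*(1-x))"
      using key px by (simp add: field_simps)
    thus ?thesis unfolding D_def by simp
  qed
  ultimately show "\<exists>y. DERIV (\<lambda>x. ell (star e x) / ell x) x :> y \<and> y \<ge> 0" by blast
qed

lemma DERIV_nonpos_open:
  fixes f :: "real \<Rightarrow> real"
  assumes "a \<le> b" "continuous_on {a..b} f"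
    and "\<And>x. a < x \<Longrightarrow> x < b \<Longrightarrow> \<exists>y. DERIV f x :> y \<and> y \<le> 0"
  shows "f b \<le> f a"
proof (cases "a = b")
  case False
  hence ab: "a < b" using assms(1) by simp
  have "\<exists>l z. a < z \<and> z < b \<and> DERIV f z :> l \<and> f b - f a = (b - a) * l"
    by (rule MVT[OF ab assms(2)]) (use assms(3) real_differentiable_def in blast)
  then obtain l z where z: "a < z" "z < b" "DERIV f z :> l" "f b - f a = (b - a) * l" by blast
  obtain y where "DERIV f z :> y" "y \<le> 0" using assms(3)[OF z(1,2)] by blast
  hence "l \<le> 0" using z(3) DERIV_unique by blast
  hence "(b - a) * l \<le> 0" using ab by (simp add: mult_nonneg_nonpos)
  thus ?thesis using z(4) by simp
qed simp

lemma Hn_eq_rule: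
  assumes "(g has_real_derivative g') (at x)" "0 < g x" "g x < 1" "D = ell (g x) * g'"
  shows "((\<lambda>x. Hn (g x)) has_real_derivative D) (at x)"
  using DERIV_chain2[OF Hn_deriv[OF assms(2,3)] assms(1)] assms(4) by simp

lemma star_range: "0 \<le> e \<Longrightarrow> e \<le> 1 \<Longrightarrow> 0 \<le> p \<Longrightarrow> p \<le> 1 \<Longrightarrow> 0 \<le> star e p \<and> star e p \<le> 1"
proof -
  assume a: "0 \<le> e" "e \<le> 1" "0 \<le> p" "p \<le> 1"
  have "0 \<le> e*(1-p) + (1-e)*p" using a by (intro add_nonneg_nonneg mult_nonneg_nonneg) auto
  moreover have "0 \<le> e*p + (1-e)*(1-p)" using a by (intro add_nonneg_nonneg mult_nonneg_nonneg) auto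
  moreover have "1 - star e p = e*p + (1-e)*(1-p)" by (simp add: star_def algebra_simps)
  ultimately show ?thesis unfolding star_def by linarith
qed

lemma Hn_tangent_half:
  assumes e: "0 \<le> e" "e < 1/2" and p0: "0 < p0" "p0 < 1/2" and p: "0 \<le> p" "p \<le> 1/2"
  defines "R \<equiv> (1 - 2*e) * ell (star e p0) / ell p0"
  shows "Hn (star e p) - R * Hn p \<ge> Hn (star e p0) - R * Hn p0"
proof -
  define c where "c = 1 - 2*e"
  have c0: "0 < c" "c \<le> 1" using e by (auto simp: c_def)
  define G where "G x = Hn (e + c*x) - R * Hn x" for x
  have Gs: "G x = Hn (star e x) - R * Hn x" for x unfolding G_def star_alt c_def ..
  have arng: "0 < e + c*x" "e + c*x < 1" if "0 < x" "x < 1" for x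
  proof -
    have "0 < c*x" using c0 that by simp
    thus "0 < e + c*x" using e by linarith
    have "0 < (1-e)*(1-x)" using e that by simp
    moreover have "0 \<le> e*x" using e that by simp
    moreover have "1 - (e + c*x) = (1-e)*(1-x) + e*x" by (simp add: c_def algebra_simps)
    ultimately show "e + c*x < 1" by linarith
  qed
  have dG: "DERIV G x :> c * ell (e + c*x) - R * ell x" if "0 < x" "x < 1" for x
    unfolding G_def using that arng[OF that]
    by (auto intro!: derivative_eq_intros Hn_eq_rule Hn_deriv)
  have contG: "continuous_on {0..1} G"
    unfolding G_def
  proof (intro continuous_intros)
    show "continuous_on {0..1} (\<lambda>x. Hn (e + c*x))"
    proof (rule continuous_on_compose2[OF Hn_cont])
      show "continuous_on {0..1} (\<lambda>x. e + c*x)" by (intro continuous_intros)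
      show "(\<lambda>x. e + c*x) ` {0..1} \<subseteq> {0..1}"
        using star_range[of e] e unfolding star_alt c_def by auto
    qed
    show "continuous_on {0..1} Hn" by (rule Hn_cont)
  qed
  have sign: "c * ell (e + c*x) - R * ell x = ell x * c * (ell (star e x) / ell x - ell (star e p0) / ell p0)"
    if "0 < x" "x < 1/2" for x
  proof -
    have "ell x > 0" using ell_pos that by simp
    thus ?thesis unfolding R_def c_def star_alt by (simp add: field_simps)
  qed
  show ?thesis
  proof (cases "p \<le> p0")
    case True
    have "G p0 \<le> G p"
    proof (rule DERIV_nonpos_open[of p p0 G, OF True])
      show "continuous_on {p..p0} G" using contG by (rule continuous_on_subset) (use p p0 in auto)
      fix x assume x: "p < x" "x < p0"
      hence x0: "0 < x" "x < 1/2" using p p0 by auto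
      have "ell (star e x) / ell x \<le> ell (star e p0) / ell p0"
        using rho_mono[OF e x0(1) _ p0(2)] x by simp
      hence "c * ell (e + c*x) - R * ell x \<le> 0"
        unfolding sign[OF x0] using ell_pos[OF x0] c0
        by (simp add: mult_nonneg_nonpos)
      thus "\<exists>y. DERIV G x :> y \<and> y \<le> 0" using dG[of x] x0 by auto
    qed
    thus ?thesis unfolding Gs by simp
  next
    case False
    have "G p0 \<le> G p"
    proof (rule DERIV_nonneg_imp_nondecreasing[of p0 p G])
      show "p0 \<le> p" using False by simp
      fix x assume x: "p0 \<le> x" "x \<le> p"
      show "\<exists>y. DERIV G x :> y \<and> y \<ge> 0"
      proof (cases "x = 1/2")
        case True
        have "c * ell (e + c*x) - R * ell x = 0"
          unfolding True c_def by (simp add: algebra_simps ell_half)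
        moreover have "DERIV G x :> c * ell (e + c*x) - R * ell x" by (rule dG) (use True in simp)+
        ultimately show ?thesis by (intro exI[of _ 0]) simp
      next
        case False
        hence x0: "0 < x" "x < 1/2" using x p p0 by auto
        have "ell (star e p0) / ell p0 \<le> ell (star e x) / ell x"
          using rho_mono[OF e p0(1) x(1) x0(2)] .
        hence "c * ell (e + c*x) - R * ell x \<ge> 0"
          unfolding sign[OF x0] using ell_pos[OF x0] c0 by simp
        thus ?thesis using dG[of x] x0 by auto
      qed
    qed
    thus ?thesis unfolding Gs by simp
  qed
qed

lemma h2_sym: "h2 (1 - p) = h2 p"
  unfolding h2_Hn Hn_sym ..

lemma star_sym: "star e (1 - p) = 1 - star e p"
  unfolding star_def by (simp add: algebra_simps)

lemma h2_cont: "continuous_on {0..1} h2"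
  unfolding h2_Hn[abs_def] by (intro continuous_intros Hn_cont) simp

lemma h2_0[simp]: "h2 0 = 0" and h2_1[simp]: "h2 1 = 0" and h2_half[simp]: "h2 (1/2) = 1"
  by (simp_all add: h2_def log_divide)

lemma Hn_strict_mono:
  assumes "0 \<le> p1" "p1 < p2" "p2 \<le> 1/2"
  shows "Hn p1 < Hn p2"
proof (rule DERIV_pos_imp_increasing_open[OF assms(2)])
  fix x assume "p1 < x" "x < p2"
  hence x: "0 < x" "x < 1/2" using assms by auto
  show "\<exists>y. DERIV Hn x :> y \<and> 0 < y" using Hn_deriv[of x] ell_pos[OF x] x by auto
next
  show "continuous_on {p1..p2} Hn" by (rule continuous_on_subset[OF Hn_cont]) (use assms in auto)
qed

lemma h2_strict_mono:
  assumes "0 \<le> p1" "p1 < p2" "p2 \<le> 1/2"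
  shows "h2 p1 < h2 p2"
  unfolding h2_Hn using Hn_strict_mono[OF assms] by (simp add: divide_strict_right_mono)

lemma h2_mono:
  assumes "0 \<le> p1" "p1 \<le> p2" "p2 \<le> 1/2"
  shows "h2 p1 \<le> h2 p2"
  using h2_strict_mono[OF assms(1) _ assms(3)] assms(2) by (cases "p1 = p2") auto

lemma h2_bounds:
  assumes "0 \<le> p" "p \<le> 1"
  shows "0 \<le> h2 p" "h2 p \<le> 1"
proof -
  have "0 \<le> h2 p \<and> h2 p \<le> 1"
  proof (cases "p \<le> 1/2")
    case True
    thus ?thesis using h2_mono[of 0 p] h2_mono[of p "1/2"] assms by auto
  next
    case False
    thus ?thesis using h2_mono[of 0 "1-p"] h2_mono[of "1-p" "1/2"] assms h2_sym[of p] by auto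
  qed
  thus "0 \<le> h2 p" "h2 p \<le> 1" by auto
qed

lemma h2_eq1:
  assumes "0 \<le> p" "p \<le> 1" "h2 p = 1"
  shows "p = 1/2"
proof (rule ccontr)
  assume ne: "p \<noteq> 1/2"
  show False
  proof (cases "p < 1/2")
    case True
    thus False using h2_strict_mono[of p "1/2"] assms by auto
  next
    case False
    thus False using h2_strict_mono[of "1-p" "1/2"] assms ne h2_sym[of p] by auto
  qed
qed

lemma h2_eq0:
  assumes "0 \<le> p" "p \<le> 1" "h2 p = 0"
  shows "p = 0 \<or> p = 1"
proof (rule ccontr)
  assume ne: "\<not> (p = 0 \<or> p = 1)"
  show False
  proof (cases "p \<le> 1/2")
    case True
    thus False using h2_strict_mono[of 0 p] assms ne by auto
  next
    case False
    thus False using h2_strict_mono[of 0 "1-p"] assms ne h2_sym[of p] by auto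
  qed
qed

lemma h2_inv:
  assumes "0 \<le> y" "y \<le> 1"
  shows "\<exists>p. 0 \<le> p \<and> p \<le> 1/2 \<and> h2 p = y"
  using IVT'[of h2 0 y "1/2"] assms continuous_on_subset[OF h2_cont, of "{0..1/2}"] by auto

lemma h2_tangent:
  assumes e: "0 \<le> e" "e \<le> 1/2" and p0: "0 < p0" "p0 < 1/2"
  shows "\<exists>R. \<forall>p. 0 \<le> p \<longrightarrow> p \<le> 1 \<longrightarrow> h2 (star e p0) + R * (h2 p - h2 p0) \<le> h2 (star e p)"
proof (cases "e = 1/2")
  case True
  have st: "star e p = 1/2" for p unfolding True star_def by (simp add: field_simps)
  show ?thesis by (intro exI[of _ 0]) (simp only: st, simp)
next
  case False
  hence e': "e < 1/2" using e by simp
  define R where "R = (1 - 2*e) * ell (star e p0) / ell p0"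
  have half: "Hn (star e p0) - R * Hn p0 \<le> Hn (star e p) - R * Hn p" if "0 \<le> p" "p \<le> 1/2" for p
    using Hn_tangent_half[OF e(1) e' p0 that] unfolding R_def .
  have all: "Hn (star e p0) - R * Hn p0 \<le> Hn (star e p) - R * Hn p" if "0 \<le> p" "p \<le> 1" for p
  proof (cases "p \<le> 1/2")
    case True thus ?thesis using half that by simp
  next
    case False
    have "Hn (star e p0) - R * Hn p0 \<le> Hn (star e (1-p)) - R * Hn (1-p)" using half[of "1-p"] False that by simp
    thus ?thesis unfolding star_sym Hn_sym .
  qed
  show ?thesis
  proof (intro exI allI impI)
    fix p :: real assume "0 \<le> p" "p \<le> 1"
    hence "(Hn (star e p0) - R * Hn p0) / ln 2 \<le> (Hn (star e p) - R * Hn p) / ln 2"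
      using all by (simp add: divide_right_mono)
    thus "h2 (star e p0) + R * (h2 p - h2 p0) \<le> h2 (star e p)"
      unfolding h2_Hn by (simp add: field_simps)
  qed
qed


lemma xlog_mult: "0 \<le> x \<Longrightarrow> 0 \<le> y \<Longrightarrow> x * y * log 2 (x * y) = x * y * log 2 x + x * y * log 2 y"
  by (cases "x = 0 \<or> y = 0") (auto simp: log_mult algebra_simps)

lemma phi_scale:
  assumes "0 \<le> c" "0 \<le> a" "0 \<le> b"
  shows "phi (c * a) (c * b) = c * phi a b"
proof -
  have "c * a + c * b = c * (a + b)" by (simp add: algebra_simps)
  thus ?thesis unfolding phi_def using xlog_mult[of c a] xlog_mult[of c b] xlog_mult[of c "a+b"] assms
    by (simp add: algebra_simps)
qed

lemma phi_h2: "phi p (1 - p) = h2 p"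
  unfolding phi_def h2_def by simp

lemma phi_comm: "phi a b = phi b a"
  unfolding phi_def by (simp add: algebra_simps)

lemma phi_zero[simp]: "phi a 0 = 0" "phi 0 b = 0"
  unfolding phi_def by simp_all

lemma phi_diag: "0 \<le> x \<Longrightarrow> phi x x = 2 * x"
  unfolding phi_def by (cases "x = 0") (auto simp: log_mult algebra_simps)

lemma phi_eq:
  assumes "0 \<le> a" "0 \<le> b" "0 < a + b"
  shows "phi a b = (a + b) * h2 (a / (a + b))"
proof -
  have e1: "(a+b) * (a/(a+b)) = a" using assms by simp
  have e2: "(a+b) * (1 - a/(a+b)) = b" using assms by (simp add: field_simps)
  have "phi a b = phi ((a+b) * (a/(a+b))) ((a+b) * (1 - a/(a+b)))"
    unfolding e1 e2 ..
  also have "\<dots> = (a + b) * phi (a/(a+b)) (1 - a/(a+b))"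
    using assms by (intro phi_scale) (auto simp: field_simps)
  finally show ?thesis by (simp add: phi_h2)
qed

lemma frac_range: "0 \<le> (a::real) \<Longrightarrow> 0 \<le> b \<Longrightarrow> 0 < a + b \<Longrightarrow> 0 \<le> a / (a+b) \<and> a / (a+b) \<le> 1"
proof -
  assume a: "0 \<le> a" "0 \<le> b" "0 < a + b"
  have "0 \<le> a / (a+b)" using a by (intro divide_nonneg_pos) auto
  moreover have "a / (a+b) \<le> 1" using a by (simp add: divide_le_eq)
  ultimately show ?thesis by simp
qed

lemma phi_bounds:
  assumes "0 \<le> a" "0 \<le> b"
  shows "0 \<le> phi a b" "phi a b \<le> a + b"
proof -
  have "0 \<le> phi a b \<and> phi a b \<le> a + b"
  proof (cases "a + b = 0")
    case True hence "a = 0" "b = 0" using assms by auto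
    thus ?thesis by simp
  next
    case False
    hence ab: "0 < a + b" using assms by simp
    show ?thesis using phi_eq[OF assms ab] h2_bounds[of "a/(a+b)"] frac_range[OF assms ab] ab
      by (auto intro: mult_nonneg_nonneg mult_left_le)
  qed
  thus "0 \<le> phi a b" "phi a b \<le> a + b" by auto
qed

lemma phi_split:
  assumes "0 \<le> a" "0 \<le> b" "0 \<le> e" "e \<le> 1"
  shows "phi (a*(1-e)) (b*e) + phi (a*e) (b*(1-e)) = phi a b + (a+b) * h2 e - phi (a*(1-e)+b*e) (a*e+b*(1-e))"
proof -
  have s: "a*(1-e)+b*e + (a*e+b*(1-e)) = a + b" by (simp add: algebra_simps)
  have "a*(1-e)*log 2 (a*(1-e)) = a*(1-e)*log 2 a + a*(1-e)*log 2 (1-e)" using xlog_mult[of a "1-e"] assms by simp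
  moreover have "b*e*log 2 (b*e) = b*e*log 2 b + b*e*log 2 e" using xlog_mult[of b e] assms by simp
  moreover have "a*e*log 2 (a*e) = a*e*log 2 a + a*e*log 2 e" using xlog_mult[of a e] assms by simp
  moreover have "b*(1-e)*log 2 (b*(1-e)) = b*(1-e)*log 2 b + b*(1-e)*log 2 (1-e)" using xlog_mult[of b "1-e"] assms by simp
  ultimately show ?thesis unfolding phi_def h2_def s
    by (simp add: algebra_simps)
qed

lemma phi_mix_le:
  assumes "0 \<le> a" "0 \<le> b" "0 \<le> e" "e \<le> 1"
  shows "phi (a*(1-e)+b*e) (a*e+b*(1-e)) \<le> phi a b + (a+b) * h2 e"
  using phi_split[OF assms] phi_bounds(1)[of "a*(1-e)" "b*e"] phi_bounds(1)[of "a*e" "b*(1-e)"] assms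
  by (simp add: mult_nonneg_nonneg)


lemma phi_mix_eq:
  assumes "0 \<le> a" "0 \<le> b" "0 < a + b" "0 \<le> e" "e \<le> 1"
  shows "phi (a*(1-e)+b*e) (a*e+b*(1-e)) = (a+b) * h2 (star e (a/(a+b)))"
proof -
  define s where "s = star e (a/(a+b))"
  have q1: "(a+b)*(a/(a+b)) = a" using assms by simp
  have "(a + b) * s = e * ((a + b) - (a + b) * (a / (a + b))) + (1 - e) * ((a + b) * (a / (a + b)))"
    unfolding s_def star_def by (simp add: algebra_simps)
  hence e1: "a*(1-e)+b*e = (a+b) * s" unfolding q1 by (simp add: algebra_simps)
  have "(a + b) * (1 - s) = (a + b) - (a + b) * s" by (simp add: algebra_simps)
  hence e2: "a*e+b*(1-e) = (a+b) * (1 - s)" unfolding e1[symmetric] by (simp add: algebra_simps)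
  have s01: "0 \<le> s \<and> s \<le> 1" unfolding s_def using star_range frac_range assms by blast
  have "phi ((a+b) * s) ((a+b) * (1 - s)) = (a+b) * phi s (1 - s)"
    using assms s01 by (intro phi_scale) auto
  thus ?thesis unfolding e1 e2 s_def[symmetric] phi_h2 .
qed

lemma mgl_term:
  assumes "0 \<le> a" "0 \<le> b" "0 \<le> e" "e \<le> 1"
    and R: "\<forall>p. 0 \<le> p \<longrightarrow> p \<le> 1 \<longrightarrow> h2 (star e p0) + R * (h2 p - h2 p0) \<le> h2 (star e p)"
  shows "(a+b) * h2 (star e p0) + R * (phi a b - (a+b) * h2 p0) \<le> phi (a*(1-e)+b*e) (a*e+b*(1-e))"
proof (cases "a + b = 0")
  case True hence "a = 0" "b = 0" using assms by auto
  thus ?thesis by simp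
next
  case False
  hence ab: "0 < a + b" using assms by simp
  define q where "q = a/(a+b)"
  have q: "0 \<le> q" "q \<le> 1" unfolding q_def using frac_range[OF assms(1,2) ab] by auto
  have "(a+b) * (h2 (star e p0) + R * (h2 q - h2 p0)) \<le> (a+b) * h2 (star e q)"
    using R q ab by (intro mult_left_mono) auto
  thus ?thesis unfolding phi_mix_eq[OF assms(1,2) ab assms(3,4)] phi_eq[OF assms(1,2) ab] q_def[symmetric]
    by (simp add: algebra_simps)
qed

lemma mgl:
  fixes a b :: "'i \<Rightarrow> real"
  assumes fin: "finite I" and nn: "\<And>i. i \<in> I \<Longrightarrow> 0 \<le> a i \<and> 0 \<le> b i"
    and tot: "(\<Sum>i\<in>I. a i + b i) = 1"
    and e: "0 \<le> e" "e \<le> 1/2" and p: "0 \<le> p" "p \<le> 1/2"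
    and hp: "h2 p = (\<Sum>i\<in>I. phi (a i) (b i))"
  shows "h2 (star e p) \<le> (\<Sum>i\<in>I. phi (a i*(1-e)+b i*e) (a i*e+b i*(1-e)))"
proof -
  consider "p = 0" | "p = 1/2" | "0 < p \<and> p < 1/2" using p by linarith
  thus ?thesis
  proof cases
    case 3
    then obtain R where R: "\<forall>q. 0 \<le> q \<longrightarrow> q \<le> 1 \<longrightarrow> h2 (star e p) + R * (h2 q - h2 p) \<le> h2 (star e q)"
      using h2_tangent[OF e] by blast
    have "(\<Sum>i\<in>I. (a i + b i) * h2 (star e p) + R * (phi (a i) (b i) - (a i + b i) * h2 p))
        \<le> (\<Sum>i\<in>I. phi (a i*(1-e)+b i*e) (a i*e+b i*(1-e)))"
      using nn e R by (intro sum_mono mgl_term) auto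
    moreover have "(\<Sum>i\<in>I. (a i + b i) * h2 (star e p) + R * (phi (a i) (b i) - (a i + b i) * h2 p))
        = h2 (star e p)"
    proof -
      have "(\<Sum>i\<in>I. (a i + b i) * h2 (star e p) + R * (phi (a i) (b i) - (a i + b i) * h2 p))
        = (\<Sum>i\<in>I. a i + b i) * h2 (star e p) + R * ((\<Sum>i\<in>I. phi (a i) (b i)) - (\<Sum>i\<in>I. a i + b i) * h2 p)"
        by (simp add: sum.distrib sum_subtractf sum_distrib_left sum_distrib_right algebra_simps)
      thus ?thesis unfolding tot hp[symmetric] by simp
    qed
    ultimately show ?thesis by simp
  next
    case 1
    have "\<forall>i\<in>I. phi (a i) (b i) = 0"
      using hp[symmetric] nn phi_bounds(1) fin unfolding 1 by (subst sum_nonneg_eq_0_iff[symmetric]) auto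
    have t: "phi (a i*(1-e)+b i*e) (a i*e+b i*(1-e)) = (a i + b i) * h2 e" if i: "i \<in> I" for i
    proof (cases "a i + b i = 0")
      case True hence "a i = 0" "b i = 0" using nn[OF i] by auto
      thus ?thesis by simp
    next
      case False
      hence ab: "0 < a i + b i" using nn[OF i] by simp
      have "(a i + b i) * h2 (a i / (a i + b i)) = 0"
        using \<open>\<forall>i\<in>I. phi (a i) (b i) = 0\<close> i phi_eq[of "a i" "b i"] nn[OF i] ab by auto
      hence "h2 (a i / (a i + b i)) = 0" using ab by simp
      hence "a i / (a i + b i) = 0 \<or> a i / (a i + b i) = 1" using h2_eq0 frac_range[of "a i" "b i"] nn[OF i] ab by blast
      hence "h2 (star e (a i / (a i + b i))) = h2 e"
        using h2_sym[of e] by (auto simp: star_def)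
      thus ?thesis using phi_mix_eq[of "a i" "b i" e] nn[OF i] ab e by simp
    qed
    have "(\<Sum>i\<in>I. phi (a i*(1-e)+b i*e) (a i*e+b i*(1-e))) = (\<Sum>i\<in>I. (a i + b i) * h2 e)"
      using t by (rule sum.cong[OF refl])
    also have "\<dots> = h2 e" by (simp add: sum_distrib_right[symmetric] tot)
    finally show ?thesis unfolding 1 by (simp add: star_def)
  next
    case 2
    have d: "(\<Sum>i\<in>I. (a i + b i) - phi (a i) (b i)) = 0"
      using hp tot unfolding 2 by (simp add: sum_subtractf)
    have "\<forall>i\<in>I. (a i + b i) - phi (a i) (b i) = 0"
      using d nn phi_bounds(2) fin by (subst sum_nonneg_eq_0_iff[symmetric]) auto
    have t: "phi (a i*(1-e)+b i*e) (a i*e+b i*(1-e)) = (a i + b i)" if i: "i \<in> I" for i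
    proof (cases "a i + b i = 0")
      case True hence "a i = 0" "b i = 0" using nn[OF i] by auto
      thus ?thesis by simp
    next
      case False
      hence ab: "0 < a i + b i" using nn[OF i] by simp
      have "(a i + b i) * h2 (a i / (a i + b i)) = (a i + b i)"
        using \<open>\<forall>i\<in>I. (a i + b i) - phi (a i) (b i) = 0\<close> i phi_eq[of "a i" "b i"] nn[OF i] ab by auto
      hence "h2 (a i / (a i + b i)) = 1" using ab by simp
      hence "a i / (a i + b i) = 1/2" using h2_eq1 frac_range[of "a i" "b i"] nn[OF i] ab by blast
      hence "h2 (star e (a i / (a i + b i))) = 1"
        by (simp add: star_def field_simps)
      thus ?thesis using phi_mix_eq[of "a i" "b i" e] nn[OF i] ab e by simp
    qed
    have "(\<Sum>i\<in>I. phi (a i*(1-e)+b i*e) (a i*e+b i*(1-e))) = (\<Sum>i\<in>I. (a i + b i))"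
      using t by (rule sum.cong[OF refl])
    also have "\<dots> = 1" by (rule tot)
    finally show ?thesis unfolding 2 by (simp add: star_def field_simps)
  qed
qed


lemma pmf_bind_point:
  assumes "\<And>t. t \<noteq> t0 \<Longrightarrow> pmf (f t) y = 0"
  shows "pmf (bind_pmf M f) y = pmf M t0 * pmf (f t0) y"
proof -
  have "pmf (bind_pmf M f) y = (\<integral>t. pmf (f t) y \<partial>measure_pmf M)" by (rule pmf_bind)
  also have "\<dots> = (\<Sum>a\<in>{t0}. pmf (f a) y * pmf M a)"
    by (rule integral_measure_pmf_real) (use assms in auto)
  finally show ?thesis by simp
qed

lemma pmf_bind_bool:
  "pmf (bind_pmf M f) y = pmf M True * pmf (f True) y + pmf M False * pmf (f False) y"
proof -
  have "pmf (bind_pmf M f) y = (\<integral>t. pmf (f t) y \<partial>measure_pmf M)" by (rule pmf_bind)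
  also have "\<dots> = (\<Sum>a\<in>UNIV. pmf (f a) y * pmf M a)"
    by (rule integral_measure_pmf_real) auto
  finally show ?thesis by (simp add: UNIV_bool)
qed

lemma map_src_AUB:
  "map_pmf (\<lambda>w. (sA w, (sU w, sB w))) (src_joint \<beta> \<epsilon> pV pU) =
   bind_pmf (bernoulli_pmf (1/2)) (\<lambda>a. bind_pmf (bec \<beta> a) (\<lambda>b. map_pmf (\<lambda>u. (a, (u, b))) (bind_pmf (pV a) pU)))"
  by (simp add: src_joint_def sU_def sA_def sB_def map_bind_pmf bind_assoc_pmf map_pmf_def bind_return_pmf)

lemma Hv_swap: "Hv J (\<lambda>w. (Y w, X w)) = Hv J (\<lambda>w. (X w, Y w))"
  using Hv_inj[of "\<lambda>(a,b). (b,a)" J "\<lambda>w. (X w, Y w)"] by (simp add: inj_def)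

lemma Hv_rot: "Hv J (\<lambda>w. (Y w, (X w, Z w))) = Hv J (\<lambda>w. (X w, Y w, Z w))"
  using Hv_inj[of "\<lambda>(a,b,c). (b,(a,c))" J "\<lambda>w. (X w, Y w, Z w)"] by (simp add: inj_def)

lemma CMI_as_CH: "CMI J X Y Z = CH J Y Z - CH J Y (\<lambda>w. (X w, Z w))"
  unfolding CMI_def CH_def Hv_rot[of J X Y Z] by simp

lemma MI_as_CH: "MI J X Y = Hv J Y - CH J Y X"
  unfolding MI_def CH_def Hv_swap[of J Y X] by simp

lemma Hv_as_CH: "Hv J Y = CH J Y (\<lambda>_. ())"
proof -
  have "Hv J (\<lambda>w. (Y w, ())) = Hv J Y"
    using Hv_inj[of "\<lambda>a. (a, ())" J Y] by (simp add: inj_def)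
  moreover have "Hv J (\<lambda>_. ()) = 0" by (simp add: Hv_def ent_return)
  ultimately show ?thesis unfolding CH_def by simp
qed

lemma CH_det:
  assumes "\<And>w. w \<in> set_pmf J \<Longrightarrow> X w = f (Y w)"
  shows "CH J X Y = 0"
proof -
  have "map_pmf (\<lambda>w. (X w, Y w)) J = map_pmf (\<lambda>y. (f y, y)) (map_pmf Y J)"
    unfolding pmf.map_comp o_def using assms by (intro map_pmf_cong) auto
  moreover have "ent (map_pmf (\<lambda>y. (f y, y)) (map_pmf Y J)) = ent (map_pmf Y J)"
    by (rule ent_map_inj) (auto simp: inj_on_def)
  ultimately show ?thesis unfolding CH_def Hv_def by simp
qed

lemma CH_T1:
  fixes X :: "'w \<Rightarrow> bool"
  assumes "finite YY" "\<And>w. w \<in> set_pmf J \<Longrightarrow> Y w \<in> YY"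
    and "\<And>x y. pmf (map_pmf (\<lambda>w. (X w, Y w)) J) (x, y) = P x y"
  shows "CH J X Y = (\<Sum>y\<in>YY. phi (P True y) (P False y))"
proof -
  let ?M = "map_pmf (\<lambda>w. (X w, Y w)) J"
  have "map_pmf snd ?M = map_pmf Y J" by (simp add: pmf.map_comp o_def)
  hence "CH J X Y = ent ?M - ent (map_pmf snd ?M)" unfolding CH_def Hv_def by simp
  also have "\<dots> = (\<Sum>y\<in>YY. phi (pmf ?M (True,y)) (pmf ?M (False,y)))"
    by (rule ent_cond_bool) (use assms in auto)
  finally show ?thesis unfolding assms(3) .
qed

lemma pmf_bec: "0 \<le> \<beta> \<Longrightarrow> \<beta> \<le> 1 \<Longrightarrow>
  pmf (bec \<beta> a) b = (if b = None then \<beta> else if b = Some a then 1 - \<beta> else 0)"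
  by (cases b) (auto simp: bec_def map_pmf_def pmf_bind_bool)

lemma pmf_bsc: "0 \<le> \<zeta> \<Longrightarrow> \<zeta> \<le> 1 \<Longrightarrow>
  pmf (bsc \<zeta> x) z = (if z = x then 1 - \<zeta> else \<zeta>)"
  by (cases x; cases z) (simp_all add: bsc_def map_pmf_def pmf_bind_bool)

lemma pmf_src_AUB:
  "pmf (map_pmf (\<lambda>w. (sA w, (sU w, sB w))) (src_joint \<beta> \<epsilon> pV pU)) (a, (u, b)) =
   1/2 * pmf (bec \<beta> a) b * pmf (bind_pmf (pV a) pU) u"
proof -
  let ?K = "\<lambda>a. bind_pmf (pV a) pU"
  have "pmf (bind_pmf (bernoulli_pmf (1/2)) (\<lambda>a. bind_pmf (bec \<beta> a) (\<lambda>b. map_pmf (\<lambda>u. (a, (u, b))) (?K a)))) (a, (u, b))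
     = pmf (bernoulli_pmf (1/2)) a * pmf (bind_pmf (bec \<beta> a) (\<lambda>b. map_pmf (\<lambda>u. (a, (u, b))) (?K a))) (a, (u, b))"
    by (rule pmf_bind_point) (auto simp: pmf_eq_0_set_pmf)
  also have "pmf (bind_pmf (bec \<beta> a) (\<lambda>b. map_pmf (\<lambda>u. (a, (u, b))) (?K a))) (a, (u, b))
     = pmf (bec \<beta> a) b * pmf (map_pmf (\<lambda>u. (a, (u, b))) (?K a)) (a, (u, b))"
    by (rule pmf_bind_point) (auto simp: pmf_eq_0_set_pmf)
  also have "pmf (map_pmf (\<lambda>u. (a, (u, b))) (?K a)) (a, (u, b)) = pmf (?K a) u"
    by (rule pmf_map_inj') (auto simp: inj_def)
  finally show ?thesis unfolding map_src_AUB by simp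
qed

lemma map_src_AB:
  "map_pmf (\<lambda>w. (sA w, sB w)) (src_joint \<beta> \<epsilon> pV pU) =
   bind_pmf (bernoulli_pmf (1/2)) (\<lambda>a. map_pmf (\<lambda>b. (a, b)) (bec \<beta> a))"
  by (simp add: src_joint_def sA_def sB_def map_bind_pmf bind_assoc_pmf map_pmf_def bind_return_pmf)

lemma map_src_AUE:
  "map_pmf (\<lambda>w. (sA w, (sU w, sE w))) (src_joint \<beta> \<epsilon> pV pU) =
   bind_pmf (bernoulli_pmf (1/2)) (\<lambda>a. bind_pmf (bsc \<epsilon> a) (\<lambda>e. map_pmf (\<lambda>u. (a, (u, e))) (bind_pmf (pV a) pU)))"
  by (simp add: src_joint_def sU_def sA_def sE_def map_bind_pmf bind_assoc_pmf map_pmf_def bind_return_pmf)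

lemma pmf_src_AB:
  "pmf (map_pmf (\<lambda>w. (sA w, sB w)) (src_joint \<beta> \<epsilon> pV pU)) (a, b) = 1/2 * pmf (bec \<beta> a) b"
proof -
  have "pmf (bind_pmf (bernoulli_pmf (1/2)) (\<lambda>a. map_pmf (\<lambda>b. (a, b)) (bec \<beta> a))) (a, b)
     = pmf (bernoulli_pmf (1/2)) a * pmf (map_pmf (\<lambda>b. (a, b)) (bec \<beta> a)) (a, b)"
    by (rule pmf_bind_point) (auto simp: pmf_eq_0_set_pmf)
  also have "pmf (map_pmf (\<lambda>b. (a, b)) (bec \<beta> a)) (a, b) = pmf (bec \<beta> a) b"
    by (rule pmf_map_inj') (auto simp: inj_def)
  finally show ?thesis unfolding map_src_AB by simp
qed

lemma pmf_src_AUE: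
  "pmf (map_pmf (\<lambda>w. (sA w, (sU w, sE w))) (src_joint \<beta> \<epsilon> pV pU)) (a, (u, e)) =
   1/2 * pmf (bsc \<epsilon> a) e * pmf (bind_pmf (pV a) pU) u"
proof -
  let ?K = "\<lambda>a. bind_pmf (pV a) pU"
  have "pmf (bind_pmf (bernoulli_pmf (1/2)) (\<lambda>a. bind_pmf (bsc \<epsilon> a) (\<lambda>e. map_pmf (\<lambda>u. (a, (u, e))) (?K a)))) (a, (u, e))
     = pmf (bernoulli_pmf (1/2)) a * pmf (bind_pmf (bsc \<epsilon> a) (\<lambda>e. map_pmf (\<lambda>u. (a, (u, e))) (?K a))) (a, (u, e))"
    by (rule pmf_bind_point) (auto simp: pmf_eq_0_set_pmf)
  also have "pmf (bind_pmf (bsc \<epsilon> a) (\<lambda>e. map_pmf (\<lambda>u. (a, (u, e))) (?K a))) (a, (u, e))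
     = pmf (bsc \<epsilon> a) e * pmf (map_pmf (\<lambda>u. (a, (u, e))) (?K a)) (a, (u, e))"
    by (rule pmf_bind_point) (auto simp: pmf_eq_0_set_pmf)
  also have "pmf (map_pmf (\<lambda>u. (a, (u, e))) (?K a)) (a, (u, e)) = pmf (?K a) u"
    by (rule pmf_map_inj') (auto simp: inj_def)
  finally show ?thesis unfolding map_src_AUE by simp
qed

lemma map_C_YQ:
  "map_pmf (\<lambda>w. (cY w, cQ w)) (chan_joint \<zeta> pX pT pQ) =
   bind_pmf pX (\<lambda>x. map_pmf (\<lambda>q. (x, q)) (bind_pmf (pT x) pQ))"
  by (simp add: chan_joint_def cY_def cQ_def map_bind_pmf bind_assoc_pmf map_pmf_def bind_return_pmf)

lemma map_C_Yu:
  "map_pmf (\<lambda>w. (cY w, ())) (chan_joint \<zeta> pX pT pQ) = map_pmf (\<lambda>x. (x, ())) pX"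
  by (simp add: chan_joint_def cY_def map_bind_pmf bind_assoc_pmf map_pmf_def bind_return_pmf)

lemma map_C_YT:
  "map_pmf (\<lambda>w. (cY w, cT w)) (chan_joint \<zeta> pX pT pQ) =
   bind_pmf pX (\<lambda>x. map_pmf (\<lambda>t. (x, t)) (pT x))"
  by (simp add: chan_joint_def cY_def cT_def map_bind_pmf bind_assoc_pmf map_pmf_def bind_return_pmf)

lemma map_C_YTQ:
  "map_pmf (\<lambda>w. (cY w, (cT w, cQ w))) (chan_joint \<zeta> pX pT pQ) =
   bind_pmf pX (\<lambda>x. bind_pmf (pT x) (\<lambda>t. map_pmf (\<lambda>q. (x, (t, q))) (pQ t)))"
  by (simp add: chan_joint_def cY_def cT_def cQ_def map_bind_pmf bind_assoc_pmf map_pmf_def bind_return_pmf)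

lemma map_C_ZQ:
  "map_pmf (\<lambda>w. (cZ w, cQ w)) (chan_joint \<zeta> pX pT pQ) =
   bind_pmf pX (\<lambda>x. bind_pmf (bind_pmf (pT x) pQ) (\<lambda>q. map_pmf (\<lambda>z. (z, q)) (bsc \<zeta> x)))"
  by (simp add: chan_joint_def cZ_def cQ_def map_bind_pmf bind_assoc_pmf map_pmf_def bind_return_pmf)

lemma map_C_ZTQ:
  "map_pmf (\<lambda>w. (cZ w, (cT w, cQ w))) (chan_joint \<zeta> pX pT pQ) =
   bind_pmf pX (\<lambda>x. bind_pmf (pT x) (\<lambda>t. bind_pmf (pQ t) (\<lambda>q. map_pmf (\<lambda>z. (z, (t, q))) (bsc \<zeta> x))))"
  by (simp add: chan_joint_def cZ_def cT_def cQ_def map_bind_pmf bind_assoc_pmf map_pmf_def bind_return_pmf)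

lemma pmf_C_YQ:
  "pmf (map_pmf (\<lambda>w. (cY w, cQ w)) (chan_joint \<zeta> pX pT pQ)) (x, q) = pmf pX x * pmf (bind_pmf (pT x) pQ) q"
proof -
  have "pmf (bind_pmf pX (\<lambda>x. map_pmf (\<lambda>q. (x, q)) (bind_pmf (pT x) pQ))) (x, q)
      = pmf pX x * pmf (map_pmf (\<lambda>q. (x, q)) (bind_pmf (pT x) pQ)) (x, q)"
    by (rule pmf_bind_point) (auto simp: pmf_eq_0_set_pmf)
  also have "pmf (map_pmf (\<lambda>q. (x, q)) (bind_pmf (pT x) pQ)) (x, q) = pmf (bind_pmf (pT x) pQ) q"
    by (rule pmf_map_inj') (auto simp: inj_def)
  finally show ?thesis unfolding map_C_YQ .
qed

lemma pmf_C_Yu: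
  "pmf (map_pmf (\<lambda>w. (cY w, ())) (chan_joint \<zeta> pX pT pQ)) (x, u) = pmf pX x"
proof -
  have "pmf (map_pmf (\<lambda>x. (x, ())) pX) (x, ()) = pmf pX x"
    by (rule pmf_map_inj') (auto simp: inj_def)
  thus ?thesis unfolding map_C_Yu by simp
qed

lemma pmf_C_YT:
  "pmf (map_pmf (\<lambda>w. (cY w, cT w)) (chan_joint \<zeta> pX pT pQ)) (x, t) = pmf pX x * pmf (pT x) t"
proof -
  have "pmf (bind_pmf pX (\<lambda>x. map_pmf (\<lambda>t. (x, t)) (pT x))) (x, t)
      = pmf pX x * pmf (map_pmf (\<lambda>t. (x, t)) (pT x)) (x, t)"
    by (rule pmf_bind_point) (auto simp: pmf_eq_0_set_pmf)
  also have "pmf (map_pmf (\<lambda>t. (x, t)) (pT x)) (x, t) = pmf (pT x) t"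
    by (rule pmf_map_inj') (auto simp: inj_def)
  finally show ?thesis unfolding map_C_YT .
qed

lemma pmf_C_YTQ:
  "pmf (map_pmf (\<lambda>w. (cY w, (cT w, cQ w))) (chan_joint \<zeta> pX pT pQ)) (x, (t, q)) =
   pmf pX x * pmf (pT x) t * pmf (pQ t) q"
proof -
  have "pmf (bind_pmf pX (\<lambda>x. bind_pmf (pT x) (\<lambda>t. map_pmf (\<lambda>q. (x, (t, q))) (pQ t)))) (x, (t, q))
      = pmf pX x * pmf (bind_pmf (pT x) (\<lambda>t. map_pmf (\<lambda>q. (x, (t, q))) (pQ t))) (x, (t, q))"
    by (rule pmf_bind_point) (auto simp: pmf_eq_0_set_pmf)
  also have "pmf (bind_pmf (pT x) (\<lambda>t. map_pmf (\<lambda>q. (x, (t, q))) (pQ t))) (x, (t, q))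
      = pmf (pT x) t * pmf (map_pmf (\<lambda>q. (x, (t, q))) (pQ t)) (x, (t, q))"
    by (rule pmf_bind_point) (auto simp: pmf_eq_0_set_pmf)
  also have "pmf (map_pmf (\<lambda>q. (x, (t, q))) (pQ t)) (x, (t, q)) = pmf (pQ t) q"
    by (rule pmf_map_inj') (auto simp: inj_def)
  finally show ?thesis unfolding map_C_YTQ by simp
qed

lemma pmf_C_ZQ_x:
  "pmf (bind_pmf (bind_pmf (pT x) pQ) (\<lambda>q. map_pmf (\<lambda>z. (z, q)) (bsc \<zeta> x))) (z, q) =
   pmf (bind_pmf (pT x) pQ) q * pmf (bsc \<zeta> x) z"
proof -
  have "pmf (bind_pmf (bind_pmf (pT x) pQ) (\<lambda>q. map_pmf (\<lambda>z. (z, q)) (bsc \<zeta> x))) (z, q)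
     = pmf (bind_pmf (pT x) pQ) q * pmf (map_pmf (\<lambda>z. (z, q)) (bsc \<zeta> x)) (z, q)"
    by (rule pmf_bind_point) (auto simp: pmf_eq_0_set_pmf)
  also have "pmf (map_pmf (\<lambda>z. (z, q)) (bsc \<zeta> x)) (z, q) = pmf (bsc \<zeta> x) z"
    by (rule pmf_map_inj') (auto simp: inj_def)
  finally show ?thesis .
qed

lemma pmf_C_ZQ:
  "pmf (map_pmf (\<lambda>w. (cZ w, cQ w)) (chan_joint \<zeta> pX pT pQ)) (z, q) =
   pmf pX True * pmf (bind_pmf (pT True) pQ) q * pmf (bsc \<zeta> True) z +
   pmf pX False * pmf (bind_pmf (pT False) pQ) q * pmf (bsc \<zeta> False) z"
  unfolding map_C_ZQ pmf_bind_bool[where M=pX] pmf_C_ZQ_x by (simp add: algebra_simps)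

lemma pmf_C_ZTQ_x:
  "pmf (bind_pmf (pT x) (\<lambda>t. bind_pmf (pQ t) (\<lambda>q. map_pmf (\<lambda>z. (z, (t, q))) (bsc \<zeta> x)))) (z, (t, q)) =
   pmf (pT x) t * pmf (pQ t) q * pmf (bsc \<zeta> x) z"
proof -
  have "pmf (bind_pmf (pT x) (\<lambda>t. bind_pmf (pQ t) (\<lambda>q. map_pmf (\<lambda>z. (z, (t, q))) (bsc \<zeta> x)))) (z, (t, q))
    = pmf (pT x) t * pmf (bind_pmf (pQ t) (\<lambda>q. map_pmf (\<lambda>z. (z, (t, q))) (bsc \<zeta> x))) (z, (t, q))"
    by (rule pmf_bind_point) (auto simp: pmf_eq_0_set_pmf)
  also have "pmf (bind_pmf (pQ t) (\<lambda>q. map_pmf (\<lambda>z. (z, (t, q))) (bsc \<zeta> x))) (z, (t, q))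
    = pmf (pQ t) q * pmf (map_pmf (\<lambda>z. (z, (t, q))) (bsc \<zeta> x)) (z, (t, q))"
    by (rule pmf_bind_point) (auto simp: pmf_eq_0_set_pmf)
  also have "pmf (map_pmf (\<lambda>z. (z, (t, q))) (bsc \<zeta> x)) (z, (t, q)) = pmf (bsc \<zeta> x) z"
    by (rule pmf_map_inj') (auto simp: inj_def)
  finally show ?thesis by simp
qed

lemma pmf_C_ZTQ:
  "pmf (map_pmf (\<lambda>w. (cZ w, (cT w, cQ w))) (chan_joint \<zeta> pX pT pQ)) (z, (t, q)) =
   pmf pX True * (pmf (pT True) t * pmf (pQ t) q * pmf (bsc \<zeta> True) z) +
   pmf pX False * (pmf (pT False) t * pmf (pQ t) q * pmf (bsc \<zeta> False) z)"
  unfolding map_C_ZTQ pmf_bind_bool[where M=pX] pmf_C_ZTQ_x ..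


lemma UNIV_bool_option: "(UNIV :: bool option set) = {None, Some True, Some False}"
proof -
  have "x \<in> {None, Some True, Some False}" for x :: "bool option"
    by (cases x) auto
  thus ?thesis by auto
qed

lemma src_support:
  assumes "w \<in> set_pmf (src_joint \<beta> \<epsilon> pV pU)"
  shows "sV w \<in> set_pmf (pV (sA w)) \<and> sU w \<in> set_pmf (pU (sV w))"
  using assms by (auto simp: src_joint_def sU_def sV_def sA_def)

lemma chan_support:
  assumes "w \<in> set_pmf (chan_joint \<zeta> pX pT pQ)"
  shows "cT w \<in> set_pmf (pT (cY w)) \<and> cQ w \<in> set_pmf (pQ (cT w))"
  using assms by (auto simp: chan_joint_def cT_def cQ_def cY_def)

context
  fixes \<beta> \<epsilon> :: real and pV :: "bool \<Rightarrow> nat pmf" and pU :: "nat \<Rightarrow> nat pmf" and UU :: "nat set"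
  assumes b01: "0 \<le> \<beta>" "\<beta> \<le> 1" and e01: "0 \<le> \<epsilon>" "\<epsilon> \<le> 1"
    and finU: "finite UU" and suppU: "\<And>v. set_pmf (pU v) \<subseteq> UU"
begin

abbreviation "SJ \<equiv> src_joint \<beta> \<epsilon> pV pU"
abbreviation "kk a u \<equiv> pmf (bind_pmf (pV a) pU) u"

lemma kk_nonneg: "0 \<le> kk a u" by simp

lemma kk_sum: "(\<Sum>u\<in>UU. kk a u) = 1"
  by (rule sum_pmf_eq_1[OF finU]) (use suppU in auto)

lemma kk_tot: "(\<Sum>u\<in>UU. kk True u / 2 + kk False u / 2) = 1"
  using kk_sum[of True] kk_sum[of False] by (simp add: sum.distrib sum_divide_distrib[symmetric])

lemma V1: "CH SJ sA sB = \<beta>"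
proof -
  have "CH SJ sA sB = (\<Sum>b\<in>UNIV. phi (1/2 * pmf (bec \<beta> True) b) (1/2 * pmf (bec \<beta> False) b))"
    by (rule CH_T1) (auto simp: pmf_src_AB)
  also have "\<dots> = \<beta>"
    unfolding UNIV_bool_option using b01 by (simp add: pmf_bec phi_diag)
  finally show ?thesis .
qed

lemma V2: "CH SJ sA (\<lambda>w. (sU w, sB w)) = \<beta> * (\<Sum>u\<in>UU. phi (kk True u / 2) (kk False u / 2))"
proof -
  have "CH SJ sA (\<lambda>w. (sU w, sB w)) =
     (\<Sum>y\<in>UU \<times> UNIV. phi (1/2 * pmf (bec \<beta> True) (snd y) * kk True (fst y)) (1/2 * pmf (bec \<beta> False) (snd y) * kk False (fst y)))"
  proof (rule CH_T1)
    show "finite (UU \<times> (UNIV :: bool option set))" using finU by simp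
    fix w assume "w \<in> set_pmf SJ"
    hence "sU w \<in> set_pmf (pU (sV w))" using src_support by blast
    thus "(sU w, sB w) \<in> UU \<times> UNIV" using suppU by auto
  qed (auto simp: pmf_src_AUB)
  also have "\<dots> = (\<Sum>u\<in>UU. \<Sum>b\<in>UNIV. phi (1/2 * pmf (bec \<beta> True) b * kk True u) (1/2 * pmf (bec \<beta> False) b * kk False u))"
    by (simp add: sum.cartesian_product case_prod_unfold)
  also have "\<dots> = (\<Sum>u\<in>UU. \<beta> * phi (kk True u / 2) (kk False u / 2))"
  proof (rule sum.cong[OF refl])
    fix u
    have "phi (\<beta> * (kk True u / 2)) (\<beta> * (kk False u / 2)) = \<beta> * phi (kk True u / 2) (kk False u / 2)"
      using b01 by (intro phi_scale) auto
    thus "(\<Sum>b\<in>UNIV. phi (1/2 * pmf (bec \<beta> True) b * kk True u) (1/2 * pmf (bec \<beta> False) b * kk False u))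
        = \<beta> * phi (kk True u / 2) (kk False u / 2)"
      unfolding UNIV_bool_option using b01 by (simp add: pmf_bec mult.commute mult.left_commute)
  qed
  finally show ?thesis by (simp add: sum_distrib_left)
qed

lemma V3: "CH SJ sA (\<lambda>w. (sU w, sE w)) =
   (\<Sum>u\<in>UU. phi (kk True u / 2) (kk False u / 2) + (kk True u / 2 + kk False u / 2) * h2 \<epsilon>
       - phi (kk True u / 2 * (1 - \<epsilon>) + kk False u / 2 * \<epsilon>) (kk True u / 2 * \<epsilon> + kk False u / 2 * (1 - \<epsilon>)))"
proof -
  have "CH SJ sA (\<lambda>w. (sU w, sE w)) =
     (\<Sum>y\<in>UU \<times> UNIV. phi (1/2 * pmf (bsc \<epsilon> True) (snd y) * kk True (fst y)) (1/2 * pmf (bsc \<epsilon> False) (snd y) * kk False (fst y)))"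
  proof (rule CH_T1)
    show "finite (UU \<times> (UNIV :: bool set))" using finU by simp
    fix w assume "w \<in> set_pmf SJ"
    hence "sU w \<in> set_pmf (pU (sV w))" using src_support by blast
    thus "(sU w, sE w) \<in> UU \<times> UNIV" using suppU by auto
  qed (auto simp: pmf_src_AUE)
  also have "\<dots> = (\<Sum>u\<in>UU. \<Sum>e\<in>UNIV. phi (1/2 * pmf (bsc \<epsilon> True) e * kk True u) (1/2 * pmf (bsc \<epsilon> False) e * kk False u))"
    by (simp add: sum.cartesian_product case_prod_unfold)
  also have "\<dots> = (\<Sum>u\<in>UU. phi (kk True u / 2 * (1 - \<epsilon>)) (kk False u / 2 * \<epsilon>) + phi (kk True u / 2 * \<epsilon>) (kk False u / 2 * (1 - \<epsilon>)))"
    unfolding UNIV_bool using e01 by (intro sum.cong[OF refl]) (simp add: pmf_bsc mult.commute mult.left_commute add.commute)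
  also have "\<dots> = (\<Sum>u\<in>UU. phi (kk True u / 2) (kk False u / 2) + (kk True u / 2 + kk False u / 2) * h2 \<epsilon>
       - phi (kk True u / 2 * (1 - \<epsilon>) + kk False u / 2 * \<epsilon>) (kk True u / 2 * \<epsilon> + kk False u / 2 * (1 - \<epsilon>)))"
    using e01 by (intro sum.cong[OF refl] phi_split) auto
  finally show ?thesis .
qed

end


context
  fixes \<zeta> :: real and pX :: "bool pmf" and pT :: "bool \<Rightarrow> nat pmf" and pQ :: "nat \<Rightarrow> nat pmf"
    and TT QQ :: "nat set"
  assumes z01: "0 \<le> \<zeta>" "\<zeta> \<le> 1"
    and finT: "finite TT" and finQ: "finite QQ"
    and suppT: "\<And>x. set_pmf (pT x) \<subseteq> TT" and suppQ: "\<And>t. set_pmf (pQ t) \<subseteq> QQ"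
begin

abbreviation "CJ \<equiv> chan_joint \<zeta> pX pT pQ"
abbreviation "mm x q \<equiv> pmf pX x * pmf (bind_pmf (pT x) pQ) q"
abbreviation "tq x t q \<equiv> pmf pX x * pmf (pT x) t * pmf (pQ t) q"

lemma chan_T: "w \<in> set_pmf CJ \<Longrightarrow> cT w \<in> TT"
  using chan_support[of w] suppT by blast

lemma chan_Q: "w \<in> set_pmf CJ \<Longrightarrow> cQ w \<in> QQ"
  using chan_support[of w] suppQ by blast

lemma mm_tot: "(\<Sum>q\<in>QQ. mm True q + mm False q) = 1"
proof -
  have s: "(\<Sum>q\<in>QQ. pmf (bind_pmf (pT x) pQ) q) = 1" for x
    by (rule sum_pmf_eq_1[OF finQ]) (use suppQ in auto)
  have "(\<Sum>q\<in>QQ. mm True q + mm False q) = pmf pX True + pmf pX False"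
    by (simp add: sum.distrib sum_distrib_left[symmetric] s)
  also have "\<dots> = 1"
  proof -
    have "(\<Sum>x\<in>UNIV. pmf pX x) = 1" by (rule sum_pmf_eq_1) auto
    thus ?thesis by (simp add: UNIV_bool add.commute)
  qed
  finally show ?thesis .
qed

lemma tq_tot: "(\<Sum>t\<in>TT. \<Sum>q\<in>QQ. tq True t q + tq False t q) = 1"
proof -
  have sq: "(\<Sum>q\<in>QQ. pmf (pQ t) q) = 1" for t
    by (rule sum_pmf_eq_1[OF finQ]) (use suppQ in auto)
  have st: "(\<Sum>t\<in>TT. pmf (pT x) t) = 1" for x
    by (rule sum_pmf_eq_1[OF finT]) (use suppT in auto)
  have "(\<Sum>t\<in>TT. \<Sum>q\<in>QQ. tq True t q + tq False t q) = pmf pX True + pmf pX False"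
    by (simp add: sum.distrib sum_distrib_left[symmetric] sq st)
  also have "\<dots> = 1"
  proof -
    have "(\<Sum>x\<in>UNIV. pmf pX x) = 1" by (rule sum_pmf_eq_1) auto
    thus ?thesis by (simp add: UNIV_bool add.commute)
  qed
  finally show ?thesis .
qed

lemma W1: "Hv CJ cY = phi (pmf pX True) (pmf pX False)"
proof -
  have "Hv CJ cY = CH CJ cY (\<lambda>_. ())" by (rule Hv_as_CH)
  also have "\<dots> = (\<Sum>y\<in>(UNIV::unit set). phi (pmf pX True) (pmf pX False))"
    by (rule CH_T1[where P="\<lambda>x y. pmf pX x"]) (auto simp: pmf_C_Yu)
  finally show ?thesis by simp
qed

lemma W2: "CH CJ cY cQ = (\<Sum>q\<in>QQ. phi (mm True q) (mm False q))"
  by (rule CH_T1) (auto simp: pmf_C_YQ finQ chan_Q)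

lemma W3: "CH CJ cY cT = (\<Sum>t\<in>TT. phi (pmf pX True * pmf (pT True) t) (pmf pX False * pmf (pT False) t))"
  by (rule CH_T1) (auto simp: pmf_C_YT finT chan_T)

lemma W4: "CH CJ cY (\<lambda>w. (cT w, cQ w)) = (\<Sum>t\<in>TT. \<Sum>q\<in>QQ. phi (tq True t q) (tq False t q))"
proof -
  have "CH CJ cY (\<lambda>w. (cT w, cQ w)) = (\<Sum>y\<in>TT \<times> QQ. phi (tq True (fst y) (snd y)) (tq False (fst y) (snd y)))"
    by (rule CH_T1) (auto simp: pmf_C_YTQ finT finQ chan_T chan_Q)
  thus ?thesis by (simp add: sum.cartesian_product case_prod_unfold)
qed

lemma W5: "CH CJ cZ cQ = (\<Sum>q\<in>QQ. phi (mm True q * (1 - \<zeta>) + mm False q * \<zeta>) (mm True q * \<zeta> + mm False q * (1 - \<zeta>)))"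
proof -
  have "CH CJ cZ cQ = (\<Sum>q\<in>QQ. phi (pmf (map_pmf (\<lambda>w. (cZ w, cQ w)) CJ) (True, q)) (pmf (map_pmf (\<lambda>w. (cZ w, cQ w)) CJ) (False, q)))"
    by (rule CH_T1) (auto simp: finQ chan_Q)
  also have "\<dots> = (\<Sum>q\<in>QQ. phi (mm True q * (1 - \<zeta>) + mm False q * \<zeta>) (mm True q * \<zeta> + mm False q * (1 - \<zeta>)))"
    unfolding pmf_C_ZQ using z01 by (simp add: pmf_bsc)
  finally show ?thesis .
qed

lemma W6: "CH CJ cZ (\<lambda>w. (cT w, cQ w)) = (\<Sum>t\<in>TT. \<Sum>q\<in>QQ.
    phi (tq True t q * (1 - \<zeta>) + tq False t q * \<zeta>) (tq True t q * \<zeta> + tq False t q * (1 - \<zeta>)))"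
proof -
  have "CH CJ cZ (\<lambda>w. (cT w, cQ w)) = (\<Sum>y\<in>TT \<times> QQ. phi (pmf (map_pmf (\<lambda>w. (cZ w, (cT w, cQ w))) CJ) (True, y)) (pmf (map_pmf (\<lambda>w. (cZ w, (cT w, cQ w))) CJ) (False, y)))"
    by (rule CH_T1) (auto simp: finT finQ chan_T chan_Q)
  also have "\<dots> = (\<Sum>t\<in>TT. \<Sum>q\<in>QQ. phi (pmf (map_pmf (\<lambda>w. (cZ w, (cT w, cQ w))) CJ) (True, (t, q))) (pmf (map_pmf (\<lambda>w. (cZ w, (cT w, cQ w))) CJ) (False, (t, q))))"
    by (simp add: sum.cartesian_product case_prod_unfold)
  also have "\<dots> = (\<Sum>t\<in>TT. \<Sum>q\<in>QQ.
    phi (tq True t q * (1 - \<zeta>) + tq False t q * \<zeta>) (tq True t q * \<zeta> + tq False t q * (1 - \<zeta>)))"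
    unfolding pmf_C_ZTQ using z01 by (simp add: pmf_bsc mult.assoc)
  finally show ?thesis .
qed

end


lemma pos_part_mono: "x \<le> y \<Longrightarrow> pos_part x \<le> pos_part y"
  unfolding pos_part_def by simp

lemma src_finite:
  assumes "finite UU" "finite VV" "\<And>v. set_pmf (pU v) \<subseteq> UU" "\<And>a. set_pmf (pV a) \<subseteq> VV"
  shows "finite (set_pmf (src_joint \<beta> \<epsilon> pV pU))"
proof (rule finite_subset)
  show "set_pmf (src_joint \<beta> \<epsilon> pV pU) \<subseteq> UU \<times> VV \<times> UNIV \<times> UNIV \<times> UNIV"
  proof
    fix w assume w: "w \<in> set_pmf (src_joint \<beta> \<epsilon> pV pU)"
    have "sV w \<in> VV" "sU w \<in> UU" using src_support[OF w] assms(3,4) by blast+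
    thus "w \<in> UU \<times> VV \<times> UNIV \<times> UNIV \<times> UNIV"
      by (cases w) (auto simp: sU_def sV_def)
  qed
  show "finite (UU \<times> VV \<times> (UNIV :: bool set) \<times> (UNIV :: bool option set) \<times> (UNIV :: bool set))"
    using assms(1,2) by simp
qed

lemma expect_zero_det:
  fixes J :: "'w pmf"
  assumes fin: "finite (set_pmf J)"
    and E: "measure_pmf.expectation J (\<lambda>w. if P w then 1 else 0 :: real) \<le> 0"
  shows "\<forall>w\<in>set_pmf J. \<not> P w"
proof -
  let ?f = "\<lambda>w. if P w then 1 else 0 :: real"
  have int: "integrable (measure_pmf J) ?f" by (rule integrable_measure_pmf_finite[OF fin])
  have "measure_pmf.expectation J ?f \<ge> 0" by (rule integral_nonneg_AE) auto
  hence "measure_pmf.expectation J ?f = 0" using E by linarith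
  hence "AE w in measure_pmf J. ?f w = 0"
    using integral_nonneg_eq_0_iff_AE[OF int] by auto
  thus ?thesis by (auto simp: AE_measure_pmf_iff split: if_splits)
qed

lemma converse:
  fixes pU :: "nat \<Rightarrow> nat pmf" and pV :: "bool \<Rightarrow> nat pmf" and pQ :: "nat \<Rightarrow> nat pmf"
    and pT :: "bool \<Rightarrow> nat pmf" and pX :: "bool pmf" and Ahat :: "nat \<Rightarrow> bool option \<Rightarrow> bool"
  assumes b: "0 \<le> \<beta>" "\<beta> \<le> 1" and e: "0 \<le> \<epsilon>" "\<epsilon> \<le> 1/2" and z: "0 \<le> \<zeta>" "\<zeta> \<le> 1/2"
    and fin: "finite UU" "finite VV" "finite QQ" "finite TT"
    and supp: "\<And>v. set_pmf (pU v) \<subseteq> UU" "\<And>a. set_pmf (pV a) \<subseteq> VV"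
      "\<And>t. set_pmf (pQ t) \<subseteq> QQ" "\<And>x. set_pmf (pT x) \<subseteq> TT"
    and h1: "CMI (src_joint \<beta> \<epsilon> pV pU) sU sA sB \<le> 1 * MI (chan_joint \<zeta> pX pT pQ) cQ cY"
    and hD: "0 \<ge> measure_pmf.expectation (src_joint \<beta> \<epsilon> pV pU) (\<lambda>w. if sA w \<noteq> Ahat (sV w) (sB w) then 1 else (0::real))"
    and hd: "\<Delta> \<le> CH (src_joint \<beta> \<epsilon> pV pU) sA (\<lambda>w. (sU w, sE w))
               - pos_part (CMI (src_joint \<beta> \<epsilon> pV pU) sV sA (\<lambda>w. (sU w, sB w))
                           - 1 * (CMI (chan_joint \<zeta> pX pT pQ) cT cY cQ - CMI (chan_joint \<zeta> pX pT pQ) cT cZ cQ))"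
  shows "\<exists>u q. 0 \<le> u \<and> u \<le> 1/2 \<and> 0 \<le> q \<and> q \<le> 1/2 \<and>
       \<beta> * (1 - h2 u) \<le> 1 - h2 q \<and>
       \<Delta> \<le> h2 \<epsilon> + h2 u - h2 (star \<epsilon> u)
            - pos_part (\<beta> * h2 u - (h2 \<zeta> + h2 q - h2 (star \<zeta> q)))"
proof -
  define S where "S = src_joint \<beta> \<epsilon> pV pU"
  define C where "C = chan_joint \<zeta> pX pT pQ"
  define ka where "ka u = pmf (bind_pmf (pV True) pU) u / 2" for u
  define kb where "kb u = pmf (bind_pmf (pV False) pU) u / 2" for u
  define HAU where "HAU = (\<Sum>u\<in>UU. phi (ka u) (kb u))"
  define ma where "ma q = pmf pX True * pmf (bind_pmf (pT True) pQ) q" for q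
  define mb where "mb q = pmf pX False * pmf (bind_pmf (pT False) pQ) q" for q
  define Hq where "Hq = (\<Sum>q\<in>QQ. phi (ma q) (mb q))"
  have e1: "0 \<le> \<epsilon>" "\<epsilon> \<le> 1" and z1: "0 \<le> \<zeta>" "\<zeta> \<le> 1" using e z by auto
  note V1' = V1[where \<beta>=\<beta> and \<epsilon>=\<epsilon> and pV=pV and pU=pU and UU=UU, OF b e1 fin(1) supp(1), folded S_def]
  note V2' = V2[where \<beta>=\<beta> and \<epsilon>=\<epsilon> and pV=pV and pU=pU and UU=UU, OF b e1 fin(1) supp(1), folded S_def ka_def kb_def HAU_def]
  note V3' = V3[where \<beta>=\<beta> and \<epsilon>=\<epsilon> and pV=pV and pU=pU and UU=UU, OF b e1 fin(1) supp(1), folded S_def ka_def kb_def]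
  note ktot = kk_tot[where \<beta>=\<beta> and \<epsilon>=\<epsilon> and pV=pV and pU=pU and UU=UU, OF b e1 fin(1) supp(1), folded ka_def kb_def]
  note W1' = W1[where \<zeta>=\<zeta> and pX=pX and pT=pT and pQ=pQ and TT=TT and QQ=QQ, OF z1 fin(4) fin(3) supp(4) supp(3), folded C_def]
  note W2' = W2[where \<zeta>=\<zeta> and pX=pX and pT=pT and pQ=pQ and TT=TT and QQ=QQ, OF z1 fin(4) fin(3) supp(4) supp(3), folded C_def ma_def mb_def Hq_def]
  note W4' = W4[where \<zeta>=\<zeta> and pX=pX and pT=pT and pQ=pQ and TT=TT and QQ=QQ, OF z1 fin(4) fin(3) supp(4) supp(3), folded C_def]
  note W5' = W5[where \<zeta>=\<zeta> and pX=pX and pT=pT and pQ=pQ and TT=TT and QQ=QQ, OF z1 fin(4) fin(3) supp(4) supp(3), folded C_def ma_def mb_def]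
  note W6' = W6[where \<zeta>=\<zeta> and pX=pX and pT=pT and pQ=pQ and TT=TT and QQ=QQ, OF z1 fin(4) fin(3) supp(4) supp(3), folded C_def]
  note mtot = mm_tot[where \<zeta>=\<zeta> and pX=pX and pT=pT and pQ=pQ and TT=TT and QQ=QQ, OF z1 fin(4) fin(3) supp(4) supp(3), folded ma_def mb_def]
  note ttot = tq_tot[where \<zeta>=\<zeta> and pX=pX and pT=pT and pQ=pQ and TT=TT and QQ=QQ, OF z1 fin(4) fin(3) supp(4) supp(3)]
  have kab: "0 \<le> ka u" "0 \<le> kb u" for u unfolding ka_def kb_def by simp_all
  have mab: "0 \<le> ma q" "0 \<le> mb q" for q unfolding ma_def mb_def by simp_all
  have "0 \<le> HAU" unfolding HAU_def using kab phi_bounds(1) by (intro sum_nonneg) auto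
  moreover have "HAU \<le> 1"
  proof -
    have "HAU \<le> (\<Sum>u\<in>UU. ka u + kb u)" unfolding HAU_def using kab phi_bounds(2) by (intro sum_mono) auto
    also have "\<dots> = 1" using ktot unfolding ka_def kb_def .
    finally show ?thesis .
  qed
  ultimately obtain u where u: "0 \<le> u" "u \<le> 1/2" "h2 u = HAU" using h2_inv by blast
  have "0 \<le> Hq" unfolding Hq_def using mab phi_bounds(1) by (intro sum_nonneg) auto
  moreover have "Hq \<le> 1"
  proof -
    have "Hq \<le> (\<Sum>q\<in>QQ. ma q + mb q)" unfolding Hq_def using mab phi_bounds(2) by (intro sum_mono) auto
    also have "\<dots> = 1" using mtot unfolding ma_def mb_def .
    finally show ?thesis .
  qed
  ultimately obtain q where q: "0 \<le> q" "q \<le> 1/2" "h2 q = Hq" using h2_inv by blast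
  have cmi1: "CMI S sU sA sB = \<beta> * (1 - h2 u)"
    unfolding CMI_as_CH V1' V2' u(3) by (simp add: algebra_simps)
  have "phi (pmf pX True) (pmf pX False) \<le> pmf pX True + pmf pX False" by (rule phi_bounds(2)) simp_all
  also have "pmf pX True + pmf pX False = 1"
  proof -
    have "(\<Sum>x\<in>UNIV. pmf pX x) = 1" by (rule sum_pmf_eq_1) auto
    thus ?thesis by (simp add: UNIV_bool add.commute)
  qed
  finally have "MI C cQ cY \<le> 1 - h2 q" unfolding MI_as_CH W1' W2' q(3) by simp
  hence ineq1: "\<beta> * (1 - h2 u) \<le> 1 - h2 q" using h1 cmi1 unfolding S_def C_def by simp
  have "h2 (star \<epsilon> u) \<le> (\<Sum>i\<in>UU. phi (ka i*(1-\<epsilon>)+kb i*\<epsilon>) (ka i*\<epsilon>+kb i*(1-\<epsilon>)))"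
    by (rule mgl[OF fin(1) _ _ e u(1,2)]) (use kab ktot u(3) in \<open>auto simp: HAU_def\<close>)
  moreover have "CH S sA (\<lambda>w. (sU w, sE w)) = HAU + h2 \<epsilon> - (\<Sum>i\<in>UU. phi (ka i*(1-\<epsilon>)+kb i*\<epsilon>) (ka i*\<epsilon>+kb i*(1-\<epsilon>)))"
  proof -
    have "CH S sA (\<lambda>w. (sU w, sE w)) = (\<Sum>i\<in>UU. phi (ka i) (kb i)) + (\<Sum>i\<in>UU. (ka i + kb i) * h2 \<epsilon>)
          - (\<Sum>i\<in>UU. phi (ka i*(1-\<epsilon>)+kb i*\<epsilon>) (ka i*\<epsilon>+kb i*(1-\<epsilon>)))"
      unfolding V3' by (simp only: sum.distrib sum_subtractf)
    also have "(\<Sum>i\<in>UU. (ka i + kb i) * h2 \<epsilon>) = (\<Sum>i\<in>UU. ka i + kb i) * h2 \<epsilon>"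
      by (rule sum_distrib_right[symmetric])
    finally have "CH S sA (\<lambda>w. (sU w, sE w)) = (\<Sum>i\<in>UU. phi (ka i) (kb i)) + (\<Sum>i\<in>UU. ka i + kb i) * h2 \<epsilon>
          - (\<Sum>i\<in>UU. phi (ka i*(1-\<epsilon>)+kb i*\<epsilon>) (ka i*\<epsilon>+kb i*(1-\<epsilon>)))" .
    thus ?thesis using ktot unfolding HAU_def ka_def kb_def by simp
  qed
  ultimately have chE: "CH S sA (\<lambda>w. (sU w, sE w)) \<le> h2 \<epsilon> + h2 u - h2 (star \<epsilon> u)"
    using u(3) by simp
  have det: "\<forall>w\<in>set_pmf S. \<not> (sA w \<noteq> Ahat (sV w) (sB w))"
    by (rule expect_zero_det) (use hD src_finite[OF fin(1,2) supp(1,2)] in \<open>auto simp: S_def\<close>)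
  have "CH S sA (\<lambda>w. (sV w, (sU w, sB w))) = 0"
    by (rule CH_det[where f="\<lambda>(v, u, b). Ahat v b"]) (use det in auto)
  hence cmi3: "CMI S sV sA (\<lambda>w. (sU w, sB w)) = \<beta> * h2 u"
    unfolding CMI_as_CH V2' u(3) by simp
  define ta where "ta t q = pmf pX True * pmf (pT True) t * pmf (pQ t) q" for t q
  define tb where "tb t q = pmf pX False * pmf (pT False) t * pmf (pQ t) q" for t q
  have tab: "0 \<le> ta t q" "0 \<le> tb t q" for t q unfolding ta_def tb_def by simp_all
  have "h2 (star \<zeta> q) \<le> (\<Sum>i\<in>QQ. phi (ma i*(1-\<zeta>)+mb i*\<zeta>) (ma i*\<zeta>+mb i*(1-\<zeta>)))"
    by (rule mgl[OF fin(3) _ _ z q(1,2)]) (use mab mtot q(3) in \<open>auto simp: Hq_def\<close>)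
  hence s1: "CH C cY cQ - CH C cZ cQ \<le> h2 q - h2 (star \<zeta> q)"
    unfolding W2' W5' q(3) ma_def mb_def by simp
  have "CH C cZ (\<lambda>w. (cT w, cQ w)) - CH C cY (\<lambda>w. (cT w, cQ w))
      = (\<Sum>t\<in>TT. \<Sum>q\<in>QQ. phi (ta t q*(1-\<zeta>)+tb t q*\<zeta>) (ta t q*\<zeta>+tb t q*(1-\<zeta>)) - phi (ta t q) (tb t q))"
    unfolding W4' W6' ta_def tb_def by (simp add: sum_subtractf)
  also have "\<dots> \<le> (\<Sum>t\<in>TT. \<Sum>q\<in>QQ. (ta t q + tb t q) * h2 \<zeta>)"
    using phi_mix_le tab z1 by (intro sum_mono) (smt (verit))
  also have "\<dots> = h2 \<zeta>"
    using ttot unfolding ta_def tb_def by (simp add: sum_distrib_right[symmetric])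
  finally have s2: "CH C cZ (\<lambda>w. (cT w, cQ w)) - CH C cY (\<lambda>w. (cT w, cQ w)) \<le> h2 \<zeta>" .
  have sec: "CMI C cT cY cQ - CMI C cT cZ cQ \<le> h2 \<zeta> + h2 q - h2 (star \<zeta> q)"
    unfolding CMI_as_CH using s1 s2 by simp
  have "pos_part (\<beta> * h2 u - (h2 \<zeta> + h2 q - h2 (star \<zeta> q))) \<le> pos_part (\<beta> * h2 u - (CMI C cT cY cQ - CMI C cT cZ cQ))"
    using sec by (intro pos_part_mono) simp
  hence "\<Delta> \<le> h2 \<epsilon> + h2 u - h2 (star \<epsilon> u) - pos_part (\<beta> * h2 u - (h2 \<zeta> + h2 q - h2 (star \<zeta> q)))"
    using hd chE cmi3 unfolding S_def C_def by simp
  thus ?thesis using u q ineq1 by blast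
qed


definition flipn :: "real \<Rightarrow> nat \<Rightarrow> nat pmf" where
  "flipn p v = map_pmf (\<lambda>f. if (v = 1) \<noteq> f then 1 else 0) (bernoulli_pmf p)"

lemma pmf_flipn:
  assumes "0 \<le> p" "p \<le> 1"
  shows "pmf (flipn p 1) 0 = p" "pmf (flipn p 1) 1 = 1 - p"
    "pmf (flipn p 0) 0 = 1 - p" "pmf (flipn p 0) 1 = p"
  using assms by (simp_all add: flipn_def map_pmf_def pmf_bind_bool)

lemma set_flipn: "set_pmf (flipn p v) \<subseteq> {0, 1}"
  unfolding flipn_def by auto

lemma pair_phi:
  assumes "0 \<le> x" "x \<le> 1"
  shows "phi (x/2) ((1-x)/2) + phi ((1-x)/2) (x/2) = h2 x"
proof -
  have "phi (x/2) ((1-x)/2) = phi (1/2 * x) (1/2 * (1-x))" by simp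
  also have "\<dots> = 1/2 * h2 x" using assms by (subst phi_scale) (auto simp: phi_h2)
  finally show ?thesis by (simp add: phi_comm[of "(1-x)/2"])
qed

lemma pair_mix:
  assumes "0 \<le> x" "x \<le> 1" "0 \<le> e" "e \<le> 1"
  shows "phi (x/2*(1-e)+(1-x)/2*e) (x/2*e+(1-x)/2*(1-e)) + phi ((1-x)/2*(1-e)+x/2*e) ((1-x)/2*e+x/2*(1-e)) = h2 (star e x)"
proof -
  define s where "s = star e x"
  have s01: "0 \<le> s" "s \<le> 1" using star_range[OF assms(3,4,1,2)] unfolding s_def by auto
  have a: "x/2*(1-e)+(1-x)/2*e = 1/2 * s" "x/2*e+(1-x)/2*(1-e) = 1/2 * (1 - s)"
    unfolding s_def star_def by (simp_all add: field_simps)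
  have b: "(1-x)/2*(1-e)+x/2*e = 1/2 * (1 - s)" "(1-x)/2*e+x/2*(1-e) = 1/2 * s"
    unfolding s_def star_def by (simp_all add: field_simps)
  have "phi (1/2 * s) (1/2 * (1 - s)) = 1/2 * h2 s" using s01 by (subst phi_scale) (auto simp: phi_h2)
  moreover have "phi (1/2 * (1 - s)) (1/2 * s) = phi (1/2 * s) (1/2 * (1 - s))" by (rule phi_comm)
  ultimately show ?thesis unfolding a b s_def[symmetric] by linarith
qed

lemma phi_mix_deg:
  assumes "0 \<le> a" "0 \<le> b" "a = 0 \<or> b = 0" "0 \<le> z" "z \<le> 1"
  shows "phi (a*(1-z)+b*z) (a*z+b*(1-z)) = (a+b) * h2 z"
proof (cases "a = 0")
  case True
  have "phi (b*z) (b*(1-z)) = b * phi z (1-z)" using assms by (intro phi_scale) auto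
  thus ?thesis using True by (simp add: phi_h2)
next
  case False
  hence b0: "b = 0" using assms by simp
  have "phi (a*(1-z)) (a*z) = a * phi (1-z) (1 - (1-z))" using assms by (subst phi_scale) auto
  moreover have "phi (1-z) z = h2 z" using phi_h2[of "1-z"] h2_sym[of z] by simp
  ultimately show ?thesis using b0 by simp
qed


lemma sum01: "(\<Sum>x\<in>{0::nat,1}. f x) = f 0 + f 1" by simp

lemma achiev:
  assumes b: "0 \<le> \<beta>" "\<beta> \<le> 1" and e: "0 \<le> \<epsilon>" "\<epsilon> \<le> 1/2" and z: "0 \<le> \<zeta>" "\<zeta> \<le> 1/2"
    and d0: "\<Delta> \<ge> 0"
    and u: "0 \<le> u" "u \<le> 1/2" and q: "0 \<le> q" "q \<le> 1/2"
    and i1: "\<beta> * (1 - h2 u) \<le> 1 - h2 q"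
    and i2: "\<Delta> \<le> h2 \<epsilon> + h2 u - h2 (star \<epsilon> u)
            - pos_part (\<beta> * h2 u - (h2 \<zeta> + h2 q - h2 (star \<zeta> q)))"
  shows "(1, 0, \<Delta>) \<in> R_in \<beta> \<epsilon> \<zeta>"
proof -
  define ind :: "bool \<Rightarrow> nat" where "ind a = (if a then 1 else 0)" for a
  define pV :: "bool \<Rightarrow> nat pmf" where "pV a = return_pmf (ind a)" for a
  define pU where "pU = flipn u"
  define pX where "pX = bernoulli_pmf (1/2)"
  define pT :: "bool \<Rightarrow> nat pmf" where "pT x = return_pmf (ind x)" for x
  define pQ where "pQ = flipn q"
  define Ahat :: "nat \<Rightarrow> bool option \<Rightarrow> bool" where "Ahat v b = (v = 1)" for v b
  define S where "S = src_joint \<beta> \<epsilon> pV pU"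
  define C where "C = chan_joint \<zeta> pX pT pQ"
  have e1: "0 \<le> \<epsilon>" "\<epsilon> \<le> 1" and z1: "0 \<le> \<zeta>" "\<zeta> \<le> 1" and u1: "u \<le> 1" and q1: "q \<le> 1"
    using e z u q by auto
  have fin: "finite {0::nat, 1}" by simp
  have sU: "\<And>v. set_pmf (pU v) \<subseteq> {0, 1}" unfolding pU_def by (rule set_flipn)
  have sV: "\<And>a. set_pmf (pV a) \<subseteq> {0, 1}" unfolding pV_def ind_def by auto
  have sQ: "\<And>t. set_pmf (pQ t) \<subseteq> {0, 1}" unfolding pQ_def by (rule set_flipn)
  have sT: "\<And>x. set_pmf (pT x) \<subseteq> {0, 1}" unfolding pT_def ind_def by auto
  note V1' = V1[where \<beta>=\<beta> and \<epsilon>=\<epsilon> and pV=pV and pU=pU and UU="{0,1}", OF b e1 fin sU, folded S_def]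
  note V2' = V2[where \<beta>=\<beta> and \<epsilon>=\<epsilon> and pV=pV and pU=pU and UU="{0,1}", OF b e1 fin sU, folded S_def]
  note V3' = V3[where \<beta>=\<beta> and \<epsilon>=\<epsilon> and pV=pV and pU=pU and UU="{0,1}", OF b e1 fin sU, folded S_def]
  note W1' = W1[where \<zeta>=\<zeta> and pX=pX and pT=pT and pQ=pQ and TT="{0,1}" and QQ="{0,1}", OF z1 fin fin sT sQ, folded C_def]
  note W2' = W2[where \<zeta>=\<zeta> and pX=pX and pT=pT and pQ=pQ and TT="{0,1}" and QQ="{0,1}", OF z1 fin fin sT sQ, folded C_def]
  note W5' = W5[where \<zeta>=\<zeta> and pX=pX and pT=pT and pQ=pQ and TT="{0,1}" and QQ="{0,1}", OF z1 fin fin sT sQ, folded C_def]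
  note W6' = W6[where \<zeta>=\<zeta> and pX=pX and pT=pT and pQ=pQ and TT="{0,1}" and QQ="{0,1}", OF z1 fin fin sT sQ, folded C_def]
  note ttot = tq_tot[where \<zeta>=\<zeta> and pX=pX and pT=pT and pQ=pQ and TT="{0,1}" and QQ="{0,1}", OF z1 fin fin sT sQ]
  have kv: "pmf (bind_pmf (pV True) pU) 0 / 2 = u/2" "pmf (bind_pmf (pV True) pU) 1 / 2 = (1-u)/2"
       "pmf (bind_pmf (pV False) pU) 0 / 2 = (1-u)/2" "pmf (bind_pmf (pV False) pU) 1 / 2 = u/2"
    using pmf_flipn[OF u(1) u1] by (simp_all add: pV_def pU_def ind_def bind_return_pmf)
  have mv: "pmf pX True * pmf (bind_pmf (pT True) pQ) 0 = q/2" "pmf pX True * pmf (bind_pmf (pT True) pQ) 1 = (1-q)/2"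
       "pmf pX False * pmf (bind_pmf (pT False) pQ) 0 = (1-q)/2" "pmf pX False * pmf (bind_pmf (pT False) pQ) 1 = q/2"
    using pmf_flipn[OF q(1) q1] by (simp_all add: pX_def pT_def pQ_def ind_def bind_return_pmf)
  have detS: "sA w = Ahat (sV w) (sB w)" if "w \<in> set_pmf S" for w
  proof -
    have "sV w \<in> set_pmf (pV (sA w))" using src_support that unfolding S_def by blast
    thus ?thesis unfolding pV_def Ahat_def ind_def by (cases "sA w") auto
  qed
  have chAB: "CH S sA sB = \<beta>" by (rule V1')
  have chAUB: "CH S sA (\<lambda>w. (sU w, sB w)) = \<beta> * h2 u"
    unfolding V2' sum01 kv using pair_phi[OF u(1) u1] by simp
  have chAVB: "CH S sA (\<lambda>w. (sV w, sB w)) = 0"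
    by (rule CH_det[where f="\<lambda>(v, b). Ahat v b"]) (use detS in auto)
  have chAVUB: "CH S sA (\<lambda>w. (sV w, (sU w, sB w))) = 0"
    by (rule CH_det[where f="\<lambda>(v, u, b). Ahat v b"]) (use detS in auto)
  have chAUE: "CH S sA (\<lambda>w. (sU w, sE w)) = h2 \<epsilon> + h2 u - h2 (star \<epsilon> u)"
  proof -
    have "CH S sA (\<lambda>w. (sU w, sE w)) =
        (phi (u/2) ((1-u)/2) + (u/2 + (1-u)/2) * h2 \<epsilon> - phi (u/2*(1-\<epsilon>)+(1-u)/2*\<epsilon>) (u/2*\<epsilon>+(1-u)/2*(1-\<epsilon>)))
      + (phi ((1-u)/2) (u/2) + ((1-u)/2 + u/2) * h2 \<epsilon> - phi ((1-u)/2*(1-\<epsilon>)+u/2*\<epsilon>) ((1-u)/2*\<epsilon>+u/2*(1-\<epsilon>)))"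
      unfolding V3' sum01 kv ..
    thus ?thesis using pair_phi[OF u(1) u1] pair_mix[OF u(1) u1 e1] by (simp add: algebra_simps)
  qed
  have D0: "measure_pmf.expectation S (\<lambda>w. if sA w \<noteq> Ahat (sV w) (sB w) then 1 else (0::real)) = 0"
  proof -
    have "measure_pmf.expectation S (\<lambda>w. if sA w \<noteq> Ahat (sV w) (sB w) then 1 else (0::real))
        = measure_pmf.expectation S (\<lambda>w. 0::real)"
      by (rule integral_cong_AE) (use detS in \<open>auto simp: AE_measure_pmf_iff\<close>)
    thus ?thesis by simp
  qed
  have detC: "cY w = (cT w = 1)" if "w \<in> set_pmf C" for w
  proof -
    have "cT w \<in> set_pmf (pT (cY w))" using chan_support that unfolding C_def by blast
    thus ?thesis unfolding pT_def ind_def by (cases "cY w") auto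
  qed
  have hY: "Hv C cY = 1" unfolding W1' by (simp add: pX_def phi_diag)
  have chYQ: "CH C cY cQ = h2 q"
    unfolding W2' sum01 mv using pair_phi[OF q(1) q1] by simp
  have chYT: "CH C cY cT = 0"
    by (rule CH_det[where f="\<lambda>t. t = 1"]) (use detC in auto)
  have chYTQ: "CH C cY (\<lambda>w. (cT w, cQ w)) = 0"
    by (rule CH_det[where f="\<lambda>(t, q). t = 1"]) (use detC in auto)
  have chZQ: "CH C cZ cQ = h2 (star \<zeta> q)"
    unfolding W5' sum01 mv using pair_mix[OF q(1) q1 z1] by simp
  have chZTQ: "CH C cZ (\<lambda>w. (cT w, cQ w)) = h2 \<zeta>"
  proof -
    let ?a = "\<lambda>t q. pmf pX True * pmf (pT True) t * pmf (pQ t) q"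
    let ?b = "\<lambda>t q. pmf pX False * pmf (pT False) t * pmf (pQ t) q"
    have "CH C cZ (\<lambda>w. (cT w, cQ w)) = (\<Sum>t\<in>{0,1}. \<Sum>q\<in>{0,1}. (?a t q + ?b t q) * h2 \<zeta>)"
      unfolding W6'
    proof (intro sum.cong refl phi_mix_deg z1)
      fix t q :: nat
      show "0 \<le> ?a t q" "0 \<le> ?b t q" by simp_all
      show "?a t q = 0 \<or> ?b t q = 0" unfolding pT_def ind_def by (auto split: split_indicator)
    qed
    also have "\<dots> = (\<Sum>t\<in>{0,1}. \<Sum>q\<in>{0,1}. ?a t q + ?b t q) * h2 \<zeta>"
      by (simp only: sum_distrib_right)
    also have "\<dots> = h2 \<zeta>" using ttot by simp
    finally show ?thesis .
  qed
  have I1: "CMI S sU sA sB = \<beta> * (1 - h2 u)" unfolding CMI_as_CH chAB chAUB by (simp add: algebra_simps)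
  have I2: "MI C cQ cY = 1 - h2 q" unfolding MI_as_CH hY chYQ ..
  have I3: "CMI S sV sA sB = \<beta>" unfolding CMI_as_CH chAB chAVB by simp
  have I4: "MI C cT cY = 1" unfolding MI_as_CH hY chYT by simp
  have I5: "CMI S sV sA (\<lambda>w. (sU w, sB w)) = \<beta> * h2 u" unfolding CMI_as_CH chAUB chAVUB by simp
  have I6: "CMI C cT cY cQ - CMI C cT cZ cQ = h2 \<zeta> + h2 q - h2 (star \<zeta> q)"
    unfolding CMI_as_CH chYQ chYTQ chZQ chZTQ by simp
  have all: "CMI S sU sA sB \<le> 1 * MI C cQ cY \<and> CMI S sV sA sB \<le> 1 * MI C cT cY \<and>
    0 \<ge> measure_pmf.expectation S (\<lambda>w. if sA w \<noteq> Ahat (sV w) (sB w) then 1 else (0::real)) \<and>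
    \<Delta> \<le> CH S sA (\<lambda>w. (sU w, sE w)) - pos_part (CMI S sV sA (\<lambda>w. (sU w, sB w)) - 1 * (CMI C cT cY cQ - CMI C cT cZ cQ))"
    using i1 i2 b unfolding I1 I2 I3 I4 I5 I6 D0 chAUE by simp
  show ?thesis unfolding R_in_def
    apply (simp only: mem_Collect_eq prod.case)
    apply (intro conjI)
       apply simp
      apply simp
     apply (rule d0)
    apply (rule exI[of _ "{0,1}"], rule exI[of _ "{0,1}"], rule exI[of _ "{0,1}"], rule exI[of _ "{0,1}"])
    apply (rule exI[of _ pU], rule exI[of _ pV], rule exI[of _ pQ], rule exI[of _ pT], rule exI[of _ pX], rule exI[of _ Ahat])
    using all sU sV sQ sT unfolding Let_def S_def C_def by simp
qed


theorem proposition3: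
  fixes \<beta> \<epsilon> \<zeta> \<Delta> :: real
  assumes "0 \<le> \<beta>" "\<beta> \<le> 1"
    and "0 \<le> \<epsilon>" "\<epsilon> \<le> 1/2"
    and "0 \<le> \<zeta>" "\<zeta> \<le> 1/2"
    and "\<Delta> \<ge> 0"
  shows "(1, 0, \<Delta>) \<in> R_in \<beta> \<epsilon> \<zeta> \<longleftrightarrow>
    (\<exists>u q. 0 \<le> u \<and> u \<le> 1/2 \<and> 0 \<le> q \<and> q \<le> 1/2 \<and>
       \<beta> * (1 - h2 u) \<le> 1 - h2 q \<and>
       \<Delta> \<le> h2 \<epsilon> + h2 u - h2 (star \<epsilon> u)
            - pos_part (\<beta> * h2 u - (h2 \<zeta> + h2 q - h2 (star \<zeta> q))))"
proof
  assume "(1, 0, \<Delta>) \<in> R_in \<beta> \<epsilon> \<zeta>"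
  then obtain UU VV QQ TT :: "nat set" and pU :: "nat \<Rightarrow> nat pmf" and pV :: "bool \<Rightarrow> nat pmf"
    and pQ :: "nat \<Rightarrow> nat pmf" and pT :: "bool \<Rightarrow> nat pmf" and pX :: "bool pmf"
    and Ahat :: "nat \<Rightarrow> bool option \<Rightarrow> bool" where
    fin: "finite UU" "finite VV" "finite QQ" "finite TT" and
    supp: "\<And>v. set_pmf (pU v) \<subseteq> UU" "\<And>a. set_pmf (pV a) \<subseteq> VV"
      "\<And>t. set_pmf (pQ t) \<subseteq> QQ" "\<And>x. set_pmf (pT x) \<subseteq> TT" and
    h1: "CMI (src_joint \<beta> \<epsilon> pV pU) sU sA sB \<le> 1 * MI (chan_joint \<zeta> pX pT pQ) cQ cY" and
    hD: "0 \<ge> measure_pmf.expectation (src_joint \<beta> \<epsilon> pV pU) (\<lambda>w. if sA w \<noteq> Ahat (sV w) (sB w) then 1 else (0::real))" and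
    hd: "\<Delta> \<le> CH (src_joint \<beta> \<epsilon> pV pU) sA (\<lambda>w. (sU w, sE w))
               - pos_part (CMI (src_joint \<beta> \<epsilon> pV pU) sV sA (\<lambda>w. (sU w, sB w))
                           - 1 * (CMI (chan_joint \<zeta> pX pT pQ) cT cY cQ - CMI (chan_joint \<zeta> pX pT pQ) cT cZ cQ))"
    unfolding R_in_def Let_def by blast
  show "\<exists>u q. 0 \<le> u \<and> u \<le> 1/2 \<and> 0 \<le> q \<and> q \<le> 1/2 \<and>
       \<beta> * (1 - h2 u) \<le> 1 - h2 q \<and>
       \<Delta> \<le> h2 \<epsilon> + h2 u - h2 (star \<epsilon> u)
            - pos_part (\<beta> * h2 u - (h2 \<zeta> + h2 q - h2 (star \<zeta> q)))"
    by (rule converse[OF assms(1-6) fin supp h1 hD hd])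
next
  assume "\<exists>u q. 0 \<le> u \<and> u \<le> 1/2 \<and> 0 \<le> q \<and> q \<le> 1/2 \<and>
       \<beta> * (1 - h2 u) \<le> 1 - h2 q \<and>
       \<Delta> \<le> h2 \<epsilon> + h2 u - h2 (star \<epsilon> u)
            - pos_part (\<beta> * h2 u - (h2 \<zeta> + h2 q - h2 (star \<zeta> q)))"
  then obtain u q where uq: "0 \<le> u" "u \<le> 1/2" "0 \<le> q" "q \<le> 1/2"
       "\<beta> * (1 - h2 u) \<le> 1 - h2 q"
       "\<Delta> \<le> h2 \<epsilon> + h2 u - h2 (star \<epsilon> u)
            - pos_part (\<beta> * h2 u - (h2 \<zeta> + h2 q - h2 (star \<zeta> q)))" by blast
  show "(1, 0, \<Delta>) \<in> R_in \<beta> \<epsilon> \<zeta>"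
    by (rule achiev[OF assms uq])
qed


end
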